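(* Assume $\lambda_1,\lambda_2>0$. If $\lambda_1\lambda_2<1$, then the map $(\theta_1,\theta_2)\mapsto(\varphi_1(\theta_2),\varphi_2(\theta_1))$ admits a unique fixed point $(\theta_1^*,\theta_2^* )$ in $(0,\infty)\times(0,\infty)$, and the two-layer game has a unique equilibrium, consisting of: Reinsurer $i$'s equilibrium premium strategy equal to the constant $\theta_i^*$ on $[0,T]$ ($i=1,2$), and the insurer's equilibrium reinsurance strategy $p^*=(p_1^*,p_2^* )$ equal to the constant \[ p_1^*=\frac{\delta_0\theta_2^*}{\delta_0\theta_1^*+\delta_0\theta_2^*+2\theta_1^*\theta_2^*},\qquad p_2^*=\frac{\delta_0\theta_1^*}{\delta_0\theta_1^*+\delta_0\theta_2^*+2\theta_1^*\theta_2^*}. \] If $\lambda_1\lambda_2\ge1$, there is no equilibrium.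
   Context: Setting: over $[0,T]$, an insurer with loss $dL=\mu dt+\sigma dW$ ($\mu,\sigma>0$, $W$ a standard Brownian motion with augmented natural filtration) and income rate $c>0$ cedes proportions $p_1,p_2$ (deterministic, $p_i\in[0,1]$, $p_1+p_2\in[0,1]$) to Reinsurers 1, 2, who charge variance premiums at rate $\mu p_k+\theta_k\sigma^2p_k^2$ with loadings $\theta_k$ (admissible: deterministic, positive, uniformly bounded). All agents have exponential utility $U_k(x)=-\frac1{\delta_k}e^{-\delta_kx}$, $\delta_k>0$ ($k=0$ insurer, $k=1,2$ reinsurers). Insurer's surplus: $dX_0=(c-\mu-\theta_1\sigma^2p_1^2-\theta_2\sigma^2p_2^2)dt-\sigma(1-p_1-p_2)dW$; given $\theta=(\theta_1,\theta_2)$, the insurer chooses $\bar p^\theta$ maximizing $\mathbb E[U_0(X_0(T))\mid X_0(t)=x]$. Reinsurer surplus under the insurer's response: $dX_k=\theta_k\sigma^2(\bar p_k^\theta)^2dt-\sigma\bar p_k^\theta dW$. With competition parameters $\lambda_1,\lambda_2$, Reinsurer $i$'s relative performance is $Y_i=X_i-\lambda_jX_j$ ($j\ne i$), and, for fixed $\theta_j$, Reinsurer $i$ chooses $\bar\theta_i^{\theta_j}$ maximizing $\mathbb E[U_i(Y_i(T))\mid Y_i(t)=y]$ (Stackelberg leader anticipating $\bar p^\theta$). An equilibrium is an admissible fixed point $\theta^*=(\theta_1^*,\theta_2^* )$ of $(\theta_1,\theta_2)\mapsto(\bar\theta_1^{\theta_2},\bar\theta_2^{\theta_1})$ (Nash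 equilibrium between reinsurers) together with the insurer's strategy $p^*=\bar p^{\theta^*}$. Define, for $i\ne j$, \[ \varphi_i(x)=\frac{(\delta_0+2\delta_i)x^2+(1+\lambda_j)\delta_0\delta_i\,x}{2x^2+\big((1+2\lambda_j)\delta_0+2\lambda_j\delta_i\big)x+\lambda_j(1+\lambda_j)\delta_0\delta_i}. \] *)

theory Defs
  imports "HOL-Probability.Probability"
begin

definition U_exp :: "real \<Rightarrow> real \<Rightarrow> real" where
  "U_exp d x = -(1 / d) * exp (- d * x)"

text \<open>Under deterministic strategies the terminal
  surplus X(T), conditionally on X(t) = x, is x + int_t^T a ds - int_t^T b dW, a
  Gaussian with mean x + int_t^T a and variance int_t^T b^2 (Wiener integral).\<close>
definition gauss_EU :: "(real \<Rightarrow> real) \<Rightarrow> real \<Rightarrow> real \<Rightarrow> real" where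
  "gauss_EU U m v = (if v = 0 then U m
     else (LINT y|lborel. U y * normal_density m (sqrt v) y))"

definition adm_reins :: "real \<Rightarrow> (real \<Rightarrow> real) \<Rightarrow> (real \<Rightarrow> real) \<Rightarrow> bool" where
  "adm_reins T p1 p2 \<longleftrightarrow>
     set_borel_measurable lborel {0..T} p1 \<and> set_borel_measurable lborel {0..T} p2 \<and>
     (\<forall>s\<in>{0..T}. 0 \<le> p1 s \<and> 0 \<le> p2 s \<and> p1 s + p2 s \<le> 1)"

definition adm_premium :: "real \<Rightarrow> (real \<Rightarrow> real) \<Rightarrow> bool" where
  "adm_premium T th \<longleftrightarrow>
     set_borel_measurable lborel {0..T} th \<and> (\<exists>B. \<forall>s\<in>{0..T}. 0 < th s \<and> th s \<le> B)"

definition J_ins :: "real \<Rightarrow> real \<Rightarrow> real \<Rightarrow> real \<Rightarrow> real \<Rightarrow> (real \<Rightarrow> real) \<Rightarrow> (real \<Rightarrow> real)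
    \<Rightarrow> (real \<Rightarrow> real) \<Rightarrow> (real \<Rightarrow> real) \<Rightarrow> real \<Rightarrow> real \<Rightarrow> real" where
  "J_ins T \<mu> \<sigma> c d0 th1 th2 p1 p2 t x =
     gauss_EU (U_exp d0)
       (x + (LINT s:{t..T}|lborel. c - \<mu> - th1 s * \<sigma>\<^sup>2 * (p1 s)\<^sup>2 - th2 s * \<sigma>\<^sup>2 * (p2 s)\<^sup>2))
       (\<sigma>\<^sup>2 * (LINT s:{t..T}|lborel. (1 - p1 s - p2 s)\<^sup>2))"

definition ins_opt :: "real \<Rightarrow> real \<Rightarrow> real \<Rightarrow> real \<Rightarrow> real \<Rightarrow> (real \<Rightarrow> real) \<Rightarrow> (real \<Rightarrow> real)
    \<Rightarrow> (real \<Rightarrow> real) \<Rightarrow> (real \<Rightarrow> real) \<Rightarrow> bool" where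
  "ins_opt T \<mu> \<sigma> c d0 th1 th2 p1 p2 \<longleftrightarrow>
     adm_reins T p1 p2 \<and>
     (\<forall>t\<in>{0..T}. \<forall>x q1 q2. adm_reins T q1 q2 \<longrightarrow>
        J_ins T \<mu> \<sigma> c d0 th1 th2 q1 q2 t x \<le> J_ins T \<mu> \<sigma> c d0 th1 th2 p1 p2 t x)"

text \<open>Reinsurer i's objective E[U_i(Y_i(T)) | Y_i(t) = y], Y_i = X_i - lam_j X_j,
  with dX_k = th_k sigma^2 p_k^2 dt - sigma p_k dW.\<close>
definition J_re :: "real \<Rightarrow> real \<Rightarrow> real \<Rightarrow> real \<Rightarrow> (real \<Rightarrow> real) \<Rightarrow> (real \<Rightarrow> real)
    \<Rightarrow> (real \<Rightarrow> real) \<Rightarrow> (real \<Rightarrow> real) \<Rightarrow> real \<Rightarrow> real \<Rightarrow> real" where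
  "J_re T \<sigma> di lj thi thj pp pq t y =
     gauss_EU (U_exp di)
       (y + (LINT s:{t..T}|lborel. thi s * \<sigma>\<^sup>2 * (pp s)\<^sup>2 - lj * (thj s * \<sigma>\<^sup>2 * (pq s)\<^sup>2)))
       (\<sigma>\<^sup>2 * (LINT s:{t..T}|lborel. (pp s - lj * pq s)\<^sup>2))"

definition is_equilibrium :: "real \<Rightarrow> real \<Rightarrow> real \<Rightarrow> real \<Rightarrow> real \<Rightarrow> real \<Rightarrow> real \<Rightarrow> real \<Rightarrow> real
    \<Rightarrow> (real \<Rightarrow> real) \<Rightarrow> (real \<Rightarrow> real) \<Rightarrow> (real \<Rightarrow> real) \<Rightarrow> (real \<Rightarrow> real) \<Rightarrow> bool" where
  "is_equilibrium T \<mu> \<sigma> c d0 d1 d2 l1 l2 th1 th2 p1 p2 \<longleftrightarrow>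
     adm_premium T th1 \<and> adm_premium T th2 \<and>
     ins_opt T \<mu> \<sigma> c d0 th1 th2 p1 p2 \<and>
     (\<forall>th1' q1 q2. adm_premium T th1' \<and> ins_opt T \<mu> \<sigma> c d0 th1' th2 q1 q2 \<longrightarrow>
        (\<forall>t\<in>{0..T}. \<forall>y. J_re T \<sigma> d1 l2 th1' th2 q1 q2 t y \<le> J_re T \<sigma> d1 l2 th1 th2 p1 p2 t y)) \<and>
     (\<forall>th2' q1 q2. adm_premium T th2' \<and> ins_opt T \<mu> \<sigma> c d0 th1 th2' q1 q2 \<longrightarrow>
        (\<forall>t\<in>{0..T}. \<forall>y. J_re T \<sigma> d2 l1 th2' th1 q2 q1 t y \<le> J_re T \<sigma> d2 l1 th2 th1 p2 p1 t y))"

text \<open>phi_i with di = delta_i, lj = lambda_j.\<close>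
definition phi :: "real \<Rightarrow> real \<Rightarrow> real \<Rightarrow> real \<Rightarrow> real" where
  "phi d0 di lj x =
     ((d0 + 2 * di) * x\<^sup>2 + (1 + lj) * d0 * di * x) /
     (2 * x\<^sup>2 + ((1 + 2 * lj) * d0 + 2 * lj * di) * x + lj * (1 + lj) * d0 * di)"

end

theory Submission
  imports Defs
begin


definition Den :: "real \<Rightarrow> real \<Rightarrow> real \<Rightarrow> real \<Rightarrow> real" where
  "Den d0 d l x = 2 * x\<^sup>2 + ((1 + 2 * l) * d0 + 2 * l * d) * x + l * (1 + l) * d0 * d"

definition rr :: "real \<Rightarrow> real \<Rightarrow> real \<Rightarrow> real \<Rightarrow> real" where
  "rr d0 d l x = ((d0 + 2 * d) * x + (1 + l) * d0 * d) / Den d0 d l x"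

lemma Den_pos: "d0 > 0 \<Longrightarrow> d > 0 \<Longrightarrow> l > 0 \<Longrightarrow> x \<ge> 0 \<Longrightarrow> Den d0 d l x > 0"
  unfolding Den_def by (intro add_nonneg_pos) (auto intro!: mult_nonneg_nonneg add_nonneg_nonneg)

lemma phi_rr: "phi d0 d l x = x * rr d0 d l x"
  unfolding phi_def rr_def Den_def by (simp add: power2_eq_square algebra_simps)

lemma rr_pos: "d0 > 0 \<Longrightarrow> d > 0 \<Longrightarrow> l > 0 \<Longrightarrow> x \<ge> 0 \<Longrightarrow> rr d0 d l x > 0"
  unfolding rr_def using Den_pos[of d0 d l x]
  by (intro divide_pos_pos) (auto intro!: add_nonneg_pos)

lemma rr0: "d0 > 0 \<Longrightarrow> d > 0 \<Longrightarrow> l > 0 \<Longrightarrow> rr d0 d l 0 = 1 / l"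
proof -
  assume a: "d0 > 0" "d > 0" "l > 0"
  then have "d * (d0 * l) + d * (d0 * (l * l)) > 0" by (simp add: add_pos_pos)
  then show ?thesis unfolding rr_def Den_def using a by (simp add: field_simps)
qed

lemma rr_decr:
  assumes "d0 > 0" "d > 0" "l > 0" "0 \<le> x" "x < y"
  shows "rr d0 d l y < rr d0 d l x"
proof -
  have D: "Den d0 d l x > 0" "Den d0 d l y > 0" using Den_pos assms by auto
  have k: "(1 + l) * d0 * d * ((1 + 2 * l) * d0 + 2 * l * d) - (d0 + 2 * d) * (l * (1 + l) * d0 * d)
       = (1 + l)^2 * d0^2 * d"
    by (simp add: power2_eq_square algebra_simps)
  have pos: "0 < 2 * (d0 + 2 * d) * x * y + 2 * ((1 + l) * d0 * d) * (x + y) + (1 + l)^2 * d0^2 * d"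
    using assms by (intro add_nonneg_pos) (auto intro!: mult_nonneg_nonneg add_nonneg_nonneg)
  have "((d0 + 2 * d) * x + (1 + l) * d0 * d) * Den d0 d l y - ((d0 + 2 * d) * y + (1 + l) * d0 * d) * Den d0 d l x
     = (y - x) * (2 * (d0 + 2 * d) * x * y + 2 * ((1 + l) * d0 * d) * (x + y) + (1 + l)^2 * d0^2 * d)"
    unfolding Den_def k[symmetric] by (simp add: power2_eq_square algebra_simps)
  also have "\<dots> > 0" using pos assms by simp
  finally show ?thesis unfolding rr_def using D by (simp add: field_simps)
qed

lemma phi_incr:
  assumes "d0 > 0" "d > 0" "l > 0" "0 \<le> x" "x < y"
  shows "phi d0 d l x < phi d0 d l y"
proof -
  have D: "Den d0 d l x > 0" "Den d0 d l y > 0" using Den_pos assms by auto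
  have k: "(d0 + 2 * d) * ((1 + 2 * l) * d0 + 2 * l * d) - 2 * ((1 + l) * d0 * d)
       = (1 + 2 * l) * d0^2 + 4 * l * d0 * d + 4 * l * d^2"
    by (simp add: power2_eq_square algebra_simps)
  have pos: "0 < ((1 + 2 * l) * d0^2 + 4 * l * d0 * d + 4 * l * d^2) * x * y
      + (d0 + 2 * d) * (l * (1 + l) * d0 * d) * (x + y) + (1 + l) * d0 * d * (l * (1 + l) * d0 * d)"
    using assms by (intro add_nonneg_pos) (auto intro!: mult_nonneg_nonneg add_nonneg_nonneg)
  have "((d0 + 2 * d) * y^2 + (1 + l) * d0 * d * y) * Den d0 d l x - ((d0 + 2 * d) * x^2 + (1 + l) * d0 * d * x) * Den d0 d l y
     = (y - x) * (((1 + 2 * l) * d0^2 + 4 * l * d0 * d + 4 * l * d^2) * x * y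
      + (d0 + 2 * d) * (l * (1 + l) * d0 * d) * (x + y) + (1 + l) * d0 * d * (l * (1 + l) * d0 * d))"
    unfolding Den_def k[symmetric] by (simp add: power2_eq_square algebra_simps)
  also have "\<dots> > 0" using pos assms by simp
  finally show ?thesis unfolding phi_def using D unfolding Den_def by (simp add: field_simps)
qed

lemma phi_lt:
  assumes "d0 > 0" "d > 0" "l > 0" "0 < x"
  shows "phi d0 d l x < x / l"
proof -
  have D: "Den d0 d l x > 0" using Den_pos assms by auto
  have "l * ((d0 + 2 * d) * x + (1 + l) * d0 * d) < Den d0 d l x"
  proof -
    have "0 < d0 * x + (d0 * (l * x) + x * (x * 2))" using assms by (intro add_pos_pos) auto
    then show ?thesis unfolding Den_def using assms by (simp add: power2_eq_square algebra_simps)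
  qed
  then have "rr d0 d l x < 1 / l" unfolding rr_def using D assms by (simp add: field_simps)
  then show ?thesis unfolding phi_rr using assms by (simp add: field_simps)
qed

definition Mb :: "real \<Rightarrow> real \<Rightarrow> real \<Rightarrow> real" where
  "Mb d0 d l = (d0 + 2 * d) / 2 + (1 + l) * d0 * d / ((1 + 2 * l) * d0 + 2 * l * d)"

lemma phi_bound:
  assumes "d0 > 0" "d > 0" "l > 0" "0 \<le> x"
  shows "phi d0 d l x \<le> Mb d0 d l"
proof -
  define C where "C = (1 + 2 * l) * d0 + 2 * l * d"
  have C: "C > 0" unfolding C_def using assms by (auto intro!: add_pos_pos)
  have D: "Den d0 d l x > 0" using Den_pos assms by auto
  have "(d0 + 2 * d) * x\<^sup>2 + (1 + l) * d0 * d * x \<le> Mb d0 d l * Den d0 d l x"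
  proof -
    have "Mb d0 d l * Den d0 d l x = (d0 + 2 * d) * x\<^sup>2 + (1 + l) * d0 * d * x
       + ((d0 + 2 * d) / 2 * C * x + (d0 + 2 * d) / 2 * (l * (1 + l) * d0 * d)
       + (1 + l) * d0 * d / C * (2 * x\<^sup>2) + (1 + l) * d0 * d / C * (l * (1 + l) * d0 * d))"
      unfolding Mb_def Den_def C_def[symmetric] using C by (simp add: field_simps)
    moreover have "0 \<le> (d0 + 2 * d) / 2 * C * x + (d0 + 2 * d) / 2 * (l * (1 + l) * d0 * d)
       + (1 + l) * d0 * d / C * (2 * x\<^sup>2) + (1 + l) * d0 * d / C * (l * (1 + l) * d0 * d)"
      using assms C by (intro add_nonneg_nonneg mult_nonneg_nonneg divide_nonneg_nonneg) auto
    ultimately show ?thesis by linarith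
  qed
  then show ?thesis unfolding phi_def using D unfolding Den_def by (simp add: field_simps)
qed

lemma phi_pos: "d0 > 0 \<Longrightarrow> d > 0 \<Longrightarrow> l > 0 \<Longrightarrow> 0 < x \<Longrightarrow> 0 < phi d0 d l x"
  unfolding phi_rr using rr_pos[of d0 d l x] by simp



lemma rr_cont: "d0 > 0 \<Longrightarrow> d > 0 \<Longrightarrow> l > 0 \<Longrightarrow> continuous_on {0..} (rr d0 d l)"
proof -
  assume a: "d0 > 0" "d > 0" "l > 0"
  have "continuous_on {0..} (Den d0 d l)" unfolding Den_def by (intro continuous_intros)
  moreover have "\<forall>x\<in>{0..}. Den d0 d l x \<noteq> 0" using Den_pos[OF a] by (metis atLeast_iff less_irrefl)
  ultimately show ?thesis unfolding rr_def by (intro continuous_on_divide continuous_intros) auto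
qed

lemma fp_none:
  assumes "d0 > 0" "d1 > 0" "d2 > 0" "l1 > 0" "l2 > 0" "l1 * l2 \<ge> 1"
    "a > 0" "b > 0" "phi d0 d1 l2 b = a" "phi d0 d2 l1 a = b"
  shows False
proof -
  have "a < b / l2" using phi_lt[of d0 d1 l2 b] assms by auto
  then have 1: "a * l2 < b" using assms by (simp add: field_simps)
  have "b < a / l1" using phi_lt[of d0 d2 l1 a] assms by auto
  then have 2: "b * l1 < a" using assms by (simp add: field_simps)
  have "a * l2 * l1 < b * l1" using 1 assms by simp
  with 2 have "a * (l1 * l2) < a * 1" by (simp add: algebra_simps)
  then have "l1 * l2 < 1" using assms by simp
  then show False using assms by simp
qed

lemma fp_prod:
  assumes "d0 > 0" "d1 > 0" "d2 > 0" "l1 > 0" "l2 > 0"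
    "a > 0" "b > 0" "phi d0 d1 l2 b = a" "phi d0 d2 l1 a = b"
  shows "rr d0 d1 l2 b * rr d0 d2 l1 a = 1"
proof -
  have "b = b * (rr d0 d1 l2 b * rr d0 d2 l1 a)"
    using assms(8,9) unfolding phi_rr by (metis mult.assoc mult.commute)
  then show ?thesis using assms by simp
qed

lemma fp_uniq_aux:
  assumes "d0 > 0" "d1 > 0" "d2 > 0" "l1 > 0" "l2 > 0"
    "a > 0" "b > 0" "phi d0 d1 l2 b = a" "phi d0 d2 l1 a = b"
    "a' > 0" "b' > 0" "phi d0 d1 l2 b' = a'" "phi d0 d2 l1 a' = b'" "b < b'"
  shows False
proof (cases "a \<le> a'")
  case True
  have 1: "rr d0 d1 l2 b' < rr d0 d1 l2 b" using rr_decr assms by auto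
  have 2: "rr d0 d2 l1 a' \<le> rr d0 d2 l1 a"
    using rr_decr[of d0 d2 l1 a a'] True assms by (cases "a = a'") auto
  have p: "rr d0 d1 l2 b' > 0" "rr d0 d2 l1 a' > 0" "rr d0 d2 l1 a > 0"
    using rr_pos assms by auto
  have "rr d0 d1 l2 b' * rr d0 d2 l1 a' < rr d0 d1 l2 b * rr d0 d2 l1 a"
    using 1 2 p by (meson mult_less_le_imp_less order_less_imp_le)
  then show False using fp_prod[of d0 d1 d2 l1 l2 a b] fp_prod[of d0 d1 d2 l1 l2 a' b'] assms by simp
next
  case False
  then have "a' < a" by simp
  then have "phi d0 d2 l1 a' < phi d0 d2 l1 a" using phi_incr[of d0 d2 l1 a' a] assms(1,3,4,10) by simp
  then show False using assms(9,13,14) by simp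
qed

lemma fp_unique:
  assumes "d0 > 0" "d1 > 0" "d2 > 0" "l1 > 0" "l2 > 0"
    "a > 0" "b > 0" "phi d0 d1 l2 b = a" "phi d0 d2 l1 a = b"
    "a' > 0" "b' > 0" "phi d0 d1 l2 b' = a'" "phi d0 d2 l1 a' = b'"
  shows "a = a' \<and> b = b'"
proof -
  have "b = b'"
  proof (rule ccontr)
    assume "b \<noteq> b'"
    then consider "b < b'" | "b' < b" by linarith
    then show False
    proof cases
      case 1 then show False using fp_uniq_aux[of d0 d1 d2 l1 l2 a b a' b'] assms by blast
    next
      case 2 then show False using fp_uniq_aux[of d0 d1 d2 l1 l2 a' b' a b] assms by blast
    qed
  qed
  then show ?thesis using assms by auto
qed

lemma fp_exists:
  assumes "d0 > 0" "d1 > 0" "d2 > 0" "l1 > 0" "l2 > 0" "l1 * l2 < 1"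
  shows "\<exists>a b. a > 0 \<and> b > 0 \<and> phi d0 d1 l2 b = a \<and> phi d0 d2 l1 a = b"
proof -
  define F where "F x = rr d0 d1 l2 x * rr d0 d2 l1 (x * rr d0 d1 l2 x) - 1" for x
  define M where "M = Mb d0 d2 l1 + 1"
  have Mb0: "Mb d0 d2 l1 \<ge> 0" unfolding Mb_def using assms
    by (intro add_nonneg_nonneg divide_nonneg_nonneg mult_nonneg_nonneg) auto
  then have M0: "M > 0" unfolding M_def by simp
  have F0: "F 0 > 0"
  proof -
    have "F 0 = 1 / (l1 * l2) - 1" unfolding F_def using assms rr0[of d0 d1 l2] rr0[of d0 d2 l1] by simp
    moreover have "1 / (l1 * l2) > 1" using assms by (simp add: field_simps)
    ultimately show ?thesis by simp
  qed
  have FM: "F M < 0"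
  proof -
    have r: "rr d0 d1 l2 M > 0" using rr_pos assms M0 by auto
    have "phi d0 d2 l1 (phi d0 d1 l2 M) \<le> Mb d0 d2 l1"
      using phi_bound assms phi_pos M0 by (meson less_imp_le)
    then have "M * (F M + 1) < M" unfolding F_def phi_rr M_def by (simp add: algebra_simps)
    then show ?thesis using M0 by (simp add: algebra_simps mult_less_0_iff)
  qed
  have cont: "continuous_on {0..M} F"
  proof -
    have sub: "{0..M} \<subseteq> {0::real..}" by auto
    have c1: "continuous_on {0..M} (rr d0 d1 l2)"
      using continuous_on_subset[OF rr_cont[of d0 d1 l2] sub] assms by blast
    have c2: "continuous_on {0..M} (\<lambda>x. x * rr d0 d1 l2 x)" by (intro continuous_intros c1)
    have img: "(\<lambda>x. x * rr d0 d1 l2 x) ` {0..M} \<subseteq> {0..}"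
    proof
      fix z assume "z \<in> (\<lambda>x. x * rr d0 d1 l2 x) ` {0..M}"
      then obtain x where x: "x \<in> {0..M}" "z = x * rr d0 d1 l2 x" by blast
      have "rr d0 d1 l2 x > 0" using rr_pos[of d0 d1 l2 x] assms x by simp
      then show "z \<in> {0..}" using x by simp
    qed
    have c3: "continuous_on {0..} (rr d0 d2 l1)" using rr_cont[of d0 d2 l1] assms by blast
    have "continuous_on {0..M} (\<lambda>x. rr d0 d2 l1 (x * rr d0 d1 l2 x))"
      by (rule continuous_on_compose2[OF c3 c2 img])
    then show ?thesis unfolding F_def by (intro continuous_intros c1)
  qed
  have "\<exists>x. 0 \<le> x \<and> x \<le> M \<and> F x = 0"
    by (rule IVT2'[OF _ _ _ cont]) (use F0 FM M0 in auto)
  then obtain x where x: "0 \<le> x" "x \<le> M" "F x = 0" by blast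
  have x0: "x > 0"
  proof (rule ccontr)
    assume "\<not> x > 0"
    then have "x = 0" using x(1) by simp
    then show False using x(3) F0 by simp
  qed
  define a where "a = phi d0 d1 l2 x"
  have a0: "a > 0" unfolding a_def using phi_pos assms x0 by auto
  have e: "rr d0 d1 l2 x * rr d0 d2 l1 (x * rr d0 d1 l2 x) = 1" using x(3) unfolding F_def by simp
  have "phi d0 d2 l1 a = (x * rr d0 d1 l2 x) * rr d0 d2 l1 (x * rr d0 d1 l2 x)" unfolding a_def phi_rr by (rule refl)
  also have "\<dots> = x * (rr d0 d1 l2 x * rr d0 d2 l1 (x * rr d0 d1 l2 x))" by (simp only: mult.assoc)
  also have "\<dots> = x" using e by simp
  finally have "phi d0 d2 l1 a = x" .
  then show ?thesis using a0 x0 unfolding a_def by blast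
qed



definition P1 :: "real \<Rightarrow> real \<Rightarrow> real \<Rightarrow> real" where
  "P1 d0 a b = d0 * b / (d0 * a + d0 * b + 2 * a * b)"
definition P2 :: "real \<Rightarrow> real \<Rightarrow> real \<Rightarrow> real" where
  "P2 d0 a b = d0 * a / (d0 * a + d0 * b + 2 * a * b)"
definition f0 :: "real \<Rightarrow> real \<Rightarrow> real \<Rightarrow> real \<Rightarrow> real \<Rightarrow> real" where
  "f0 d0 a b p q = a * p\<^sup>2 + b * q\<^sup>2 + d0 / 2 * (1 - p - q)\<^sup>2"
definition G :: "real \<Rightarrow> real \<Rightarrow> real \<Rightarrow> real \<Rightarrow> real \<Rightarrow> real \<Rightarrow> real" where
  "G d l a b p q = a * p\<^sup>2 - l * (b * q\<^sup>2) - d / 2 * (p - l * q)\<^sup>2"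

lemma P_swap: "P2 d0 a b = P1 d0 b a" "P1 d0 a b = P2 d0 b a"
  unfolding P1_def P2_def by (simp_all add: algebra_simps)

lemma P_bounds:
  assumes "d0 > 0" "a > 0" "b > 0"
  shows "0 \<le> P1 d0 a b" "0 \<le> P2 d0 a b" "P1 d0 a b + P2 d0 a b \<le> 1"
proof -
  have D: "d0 * a + d0 * b + 2 * a * b > 0" using assms by (intro add_pos_pos) auto
  show "0 \<le> P1 d0 a b" "0 \<le> P2 d0 a b" unfolding P1_def P2_def using D assms by auto
  have "P1 d0 a b + P2 d0 a b = (d0 * b + d0 * a) / (d0 * a + d0 * b + 2 * a * b)"
    unfolding P1_def P2_def by (simp add: add_divide_distrib)
  also have "\<dots> \<le> 1" using D assms by (simp add: field_simps)
  finally show "P1 d0 a b + P2 d0 a b \<le> 1" .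
qed

lemma f0_expand:
  "f0 d0 a b p q = f0 d0 a b u v + (2 * a * u - d0 * (1 - u - v)) * (p - u)
     + (2 * b * v - d0 * (1 - u - v)) * (q - v) + a * (p - u)\<^sup>2 + b * (q - v)\<^sup>2
     + d0 / 2 * ((p - u) + (q - v))\<^sup>2"
  unfolding f0_def by (simp add: power2_eq_square field_simps)

lemma ins_pt:
  assumes "d0 > 0" "a > 0" "b > 0"
  shows "f0 d0 a b (P1 d0 a b) (P2 d0 a b) \<le> f0 d0 a b p q"
    and "f0 d0 a b p q = f0 d0 a b (P1 d0 a b) (P2 d0 a b) \<Longrightarrow> p = P1 d0 a b \<and> q = P2 d0 a b"
proof -
  have D: "d0 * a + d0 * b + 2 * a * b > 0" using assms by (intro add_pos_pos) auto
  define Dn where "Dn = d0 * a + d0 * b + 2 * a * b"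
  have Dn: "Dn > 0" "P1 d0 a b = d0 * b / Dn" "P2 d0 a b = d0 * a / Dn"
    using D unfolding Dn_def P1_def P2_def by auto
  have r: "1 - P1 d0 a b - P2 d0 a b = 2 * a * b / Dn"
  proof -
    have "1 - P1 d0 a b - P2 d0 a b = (Dn - d0 * b - d0 * a) / Dn"
      unfolding Dn(2,3) using Dn(1) by (simp add: diff_divide_distrib)
    also have "Dn - d0 * b - d0 * a = 2 * a * b" unfolding Dn_def by simp
    finally show ?thesis .
  qed
  have foc1: "2 * a * P1 d0 a b - d0 * (1 - P1 d0 a b - P2 d0 a b) = 0"
    unfolding r unfolding Dn(2) using Dn(1) by (simp add: field_simps)
  have foc2: "2 * b * P2 d0 a b - d0 * (1 - P1 d0 a b - P2 d0 a b) = 0"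
    unfolding r unfolding Dn(3) using Dn(1) by (simp add: field_simps)
  have e: "f0 d0 a b p q = f0 d0 a b (P1 d0 a b) (P2 d0 a b) + (a * (p - P1 d0 a b)\<^sup>2 + b * (q - P2 d0 a b)\<^sup>2
     + d0 / 2 * ((p - P1 d0 a b) + (q - P2 d0 a b))\<^sup>2)"
    using f0_expand[of d0 a b p q "P1 d0 a b" "P2 d0 a b"] foc1 foc2 by simp
  have nn: "0 \<le> a * (p - P1 d0 a b)\<^sup>2" "0 \<le> b * (q - P2 d0 a b)\<^sup>2"
     "0 \<le> d0 / 2 * ((p - P1 d0 a b) + (q - P2 d0 a b))\<^sup>2" using assms by auto
  show "f0 d0 a b (P1 d0 a b) (P2 d0 a b) \<le> f0 d0 a b p q" using e nn by linarith
  assume "f0 d0 a b p q = f0 d0 a b (P1 d0 a b) (P2 d0 a b)"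
  then have "a * (p - P1 d0 a b)\<^sup>2 = 0" "b * (q - P2 d0 a b)\<^sup>2 = 0" using e nn by linarith+
  then show "p = P1 d0 a b \<and> q = P2 d0 a b" using assms by simp
qed

lemma big_ident:
  fixes x c y d l d0 :: real
  defines "K \<equiv> d0 + 2 * y"
  shows "(x * y\<^sup>2 - l * x\<^sup>2 * y - d / 2 * (y - l * x)\<^sup>2) * (K * c + d0 * y)\<^sup>2
         - (c * y\<^sup>2 - l * c\<^sup>2 * y - d / 2 * (y - l * c)\<^sup>2) * (K * x + d0 * y)\<^sup>2
   = - (- (K * c + d0 * y) * (y\<^sup>2 * (d0 * y + d * d0 * l + d * K) - c * y * (K * y + d * l * K + 2 * l * d0 * y + d * l\<^sup>2 * d0)) * (x - c)
      + ((c * y\<^sup>2 - l * c\<^sup>2 * y - d / 2 * (y - l * c)\<^sup>2) * K\<^sup>2 + (l * y + d * l\<^sup>2 / 2) * (K * c + d0 * y)\<^sup>2) * (x - c)\<^sup>2)"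
  unfolding K_def by (simp add: power2_eq_square field_simps)

lemma G_form:
  assumes "d0 > 0" "y > 0" "z \<ge> 0"
  shows "G d l z y (P1 d0 z y) (P2 d0 z y)
     = d0\<^sup>2 * (z * y\<^sup>2 - l * z\<^sup>2 * y - d / 2 * (y - l * z)\<^sup>2) / ((d0 + 2 * y) * z + d0 * y)\<^sup>2"
proof -
  define Dz where "Dz = (d0 + 2 * y) * z + d0 * y"
  have Dz: "Dz > 0" unfolding Dz_def using assms by (intro add_nonneg_pos) auto
  have P: "P1 d0 z y = d0 * y / Dz" "P2 d0 z y = d0 * z / Dz"
    unfolding P1_def P2_def Dz_def by (simp_all add: algebra_simps)
  show ?thesis unfolding G_def P Dz_def[symmetric] using Dz
    by (simp add: power2_eq_square field_simps)
qed

lemma re_pt: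
  assumes "d0 > 0" "d > 0" "l > 0" "x > 0" "y > 0"
  shows "G d l x y (P1 d0 x y) (P2 d0 x y) \<le> G d l (phi d0 d l y) y (P1 d0 (phi d0 d l y) y) (P2 d0 (phi d0 d l y) y)"
    and "G d l x y (P1 d0 x y) (P2 d0 x y) = G d l (phi d0 d l y) y (P1 d0 (phi d0 d l y) y) (P2 d0 (phi d0 d l y) y)
         \<Longrightarrow> x = phi d0 d l y"
proof -
  define c where "c = phi d0 d l y"
  define K where "K = d0 + 2 * y"
  define n where "n z = z * y\<^sup>2 - l * z\<^sup>2 * y - d / 2 * (y - l * z)\<^sup>2" for z
  define Dd where "Dd z = K * z + d0 * y" for z
  define \<kappa> where "\<kappa> = n c * K\<^sup>2 + (l * y + d * l\<^sup>2 / 2) * (Dd c)\<^sup>2"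
  have c0: "c > 0" unfolding c_def using phi_pos assms by auto
  have K0: "K > 0" unfolding K_def using assms by simp
  have Dc: "Dd c > 0" "Dd x > 0" unfolding Dd_def using K0 c0 assms by (auto intro!: add_pos_pos)
  have Gc: "G d l c y (P1 d0 c y) (P2 d0 c y) = d0\<^sup>2 * n c / (Dd c)\<^sup>2"
    using G_form[of d0 y c d l] assms c0 unfolding n_def Dd_def K_def by simp
  have Gx: "G d l x y (P1 d0 x y) (P2 d0 x y) = d0\<^sup>2 * n x / (Dd x)\<^sup>2"
    using G_form[of d0 y x d l] assms unfolding n_def Dd_def K_def by simp
  have Lc: "y\<^sup>2 * (d0 * y + d * d0 * l + d * K) - c * y * (K * y + d * l * K + 2 * l * d0 * y + d * l\<^sup>2 * d0) = 0"
  proof -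
    have den: "K * y + d * l * K + 2 * l * d0 * y + d * l\<^sup>2 * d0 = Den d0 d l y"
      unfolding K_def Den_def by (simp add: power2_eq_square algebra_simps)
    have Dp: "Den d0 d l y > 0" using Den_pos assms by auto
    have "c * Den d0 d l y = (d0 + 2 * d) * y\<^sup>2 + (1 + l) * d0 * d * y"
      unfolding c_def phi_def using Dp unfolding Den_def by (simp add: field_simps)
    also have "\<dots> = y * (d0 * y + d * d0 * l + d * K)" unfolding K_def by (simp add: power2_eq_square algebra_simps)
    finally have E: "c * Den d0 d l y = y * (d0 * y + d * d0 * l + d * K)" .
    have "y\<^sup>2 * (d0 * y + d * d0 * l + d * K) - c * y * Den d0 d l y
        = y * (y * (d0 * y + d * d0 * l + d * K) - c * Den d0 d l y)"
      by (simp add: power2_eq_square algebra_simps)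
    then show ?thesis unfolding den E by simp
  qed
  have key: "n z * (Dd c)\<^sup>2 - n c * (Dd z)\<^sup>2 = - (\<kappa> * (z - c)\<^sup>2)" for z
    using big_ident[of z y l d d0 c] Lc unfolding n_def Dd_def \<kappa>_def K_def by simp
  have kpos: "\<kappa> > 0"
  proof -
    define x0 where "x0 = - (d0 * y / K)"
    have x0: "x0 < 0" unfolding x0_def using K0 assms by simp
    have Dx0: "Dd x0 = 0" unfolding Dd_def x0_def using K0 by simp
    have "n x0 < 0"
    proof -
      have "x0 * y\<^sup>2 < 0" using x0 assms by (simp add: mult_neg_pos)
      moreover have "0 \<le> l * x0\<^sup>2 * y" using assms by simp
      moreover have "0 \<le> d / 2 * (y - l * x0)\<^sup>2" using assms by simp
      ultimately show ?thesis unfolding n_def by linarith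
    qed
    then have "n x0 * (Dd c)\<^sup>2 < 0" using Dc by (simp add: mult_neg_pos)
    then have "\<kappa> * (x0 - c)\<^sup>2 > 0" using key[of x0] Dx0 by simp
    then show ?thesis using zero_less_mult_pos2 by fastforce
  qed
  have diff: "G d l x y (P1 d0 x y) (P2 d0 x y) - G d l c y (P1 d0 c y) (P2 d0 c y)
      = - (d0\<^sup>2 * \<kappa> * (x - c)\<^sup>2 / ((Dd x)\<^sup>2 * (Dd c)\<^sup>2))"
  proof -
    have "G d l x y (P1 d0 x y) (P2 d0 x y) - G d l c y (P1 d0 c y) (P2 d0 c y)
       = d0\<^sup>2 * (n x * (Dd c)\<^sup>2 - n c * (Dd x)\<^sup>2) / ((Dd x)\<^sup>2 * (Dd c)\<^sup>2)"
      unfolding Gx Gc using Dc by (simp add: field_simps)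
    then show ?thesis unfolding key by simp
  qed
  have nn: "0 \<le> d0\<^sup>2 * \<kappa> * (x - c)\<^sup>2 / ((Dd x)\<^sup>2 * (Dd c)\<^sup>2)" using kpos by simp
  show "G d l x y (P1 d0 x y) (P2 d0 x y) \<le> G d l (phi d0 d l y) y (P1 d0 (phi d0 d l y) y) (P2 d0 (phi d0 d l y) y)"
    using diff nn unfolding c_def by linarith
  assume "G d l x y (P1 d0 x y) (P2 d0 x y) = G d l (phi d0 d l y) y (P1 d0 (phi d0 d l y) y) (P2 d0 (phi d0 d l y) y)"
  then have "d0\<^sup>2 * \<kappa> * (x - c)\<^sup>2 / ((Dd x)\<^sup>2 * (Dd c)\<^sup>2) = 0" using diff unfolding c_def by simp
  then show "x = phi d0 d l y" using kpos Dc assms unfolding c_def by simp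
qed



lemma gauss_exp:
  assumes "d > 0" "v \<ge> 0"
  shows "gauss_EU (U_exp d) m v = -(1 / d) * exp (- d * m + d\<^sup>2 * v / 2)"
proof (cases "v = 0")
  case True then show ?thesis by (simp add: gauss_EU_def U_exp_def)
next
  case False
  then have v: "v > 0" using assms by simp
  define s where "s = sqrt v"
  have s2: "s\<^sup>2 = v" unfolding s_def using v by simp
  have pt: "U_exp d y * normal_density m s y = (-(1 / d) * exp (- d * m + d\<^sup>2 * v / 2)) * normal_density (m - d * v) s y" for y
  proof -
    have e: "- d * y + (-(y - m)\<^sup>2 / (2 * v)) = (- d * m + d\<^sup>2 * v / 2) + (-(y - (m - d * v))\<^sup>2 / (2 * v))"
      using v by (simp add: power2_eq_square field_simps)
    have "exp (- d * y) * exp (-(y - m)\<^sup>2 / (2 * v)) = exp (- d * m + d\<^sup>2 * v / 2) * exp (-(y - (m - d * v))\<^sup>2 / (2 * v))"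
      using e by (simp add: exp_add[symmetric])
    then show ?thesis unfolding U_exp_def normal_density_def s2 by (simp add: algebra_simps)
  qed
  have "gauss_EU (U_exp d) m v = (LINT y|lborel. U_exp d y * normal_density m s y)"
    unfolding gauss_EU_def s_def using False by simp
  also have "\<dots> = (-(1 / d) * exp (- d * m + d\<^sup>2 * v / 2)) * (LINT y|lborel. normal_density (m - d * v) s y)"
    unfolding pt by simp
  also have "\<dots> = -(1 / d) * exp (- d * m + d\<^sup>2 * v / 2)"
    using integral_normal_density[of s "m - d * v"] v unfolding s_def by simp
  finally show ?thesis .
qed

lemma U_mono: "(d::real) > 0 \<Longrightarrow> (-(1 / d) * exp (- d * A) \<le> -(1 / d) * exp (- d * B)) \<longleftrightarrow> A \<le> B"
proof -
  assume d: "d > 0"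
  have "(-(1 / d) * exp (- d * A) \<le> -(1 / d) * exp (- d * B)) \<longleftrightarrow> exp (- d * B) \<le> exp (- d * A)"
    using d by (intro mult_le_cancel_left_neg) simp
  also have "\<dots> \<longleftrightarrow> - d * B \<le> - d * A" by simp
  also have "\<dots> \<longleftrightarrow> A \<le> B" using d by simp
  finally show ?thesis .
qed

lemma sbm_iff: fixes f :: "real \<Rightarrow> real" shows "set_borel_measurable lborel S f \<longleftrightarrow> (\<lambda>x. indicator S x * f x) \<in> borel_measurable lborel"
  unfolding set_borel_measurable_def by (simp add: scaleR_conv_of_real)

lemma sbm_gen:
  fixes F :: "real \<Rightarrow> real \<Rightarrow> real \<Rightarrow> real \<Rightarrow> real" and f1 f2 f3 f4 :: "real \<Rightarrow> real"
  assumes "set_borel_measurable lborel S f1" "set_borel_measurable lborel S f2"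
    "set_borel_measurable lborel S f3" "set_borel_measurable lborel S f4"
    and FM: "\<And>g1 g2 g3 g4 :: real \<Rightarrow> real. g1 \<in> borel_measurable lborel \<Longrightarrow> g2 \<in> borel_measurable lborel \<Longrightarrow>
       g3 \<in> borel_measurable lborel \<Longrightarrow> g4 \<in> borel_measurable lborel \<Longrightarrow>
       (\<lambda>s. F (g1 s) (g2 s) (g3 s) (g4 s)) \<in> borel_measurable lborel"
    and S: "S \<in> sets lborel"
  shows "set_borel_measurable lborel S (\<lambda>s. F (f1 s) (f2 s) (f3 s) (f4 s))"
proof -
  let ?g = "\<lambda>f x. indicator S x * f x"
  have "(\<lambda>s. F (?g f1 s) (?g f2 s) (?g f3 s) (?g f4 s)) \<in> borel_measurable lborel"
    using FM[of "?g f1" "?g f2" "?g f3" "?g f4"] assms(1-4) unfolding sbm_iff by blast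
  then have "(\<lambda>x. indicator S x * F (?g f1 x) (?g f2 x) (?g f3 x) (?g f4 x)) \<in> borel_measurable lborel"
    using S by (intro borel_measurable_times) auto
  also have "(\<lambda>x. indicator S x * F (?g f1 x) (?g f2 x) (?g f3 x) (?g f4 x))
      = (\<lambda>x. indicator S x * F (f1 x) (f2 x) (f3 x) (f4 x))"
    by (auto simp: indicator_def)
  finally show ?thesis unfolding sbm_iff .
qed

lemma int_from_sbm:
  fixes f :: "real \<Rightarrow> real"
  assumes "set_borel_measurable lborel {0..T} f" "0 \<le> t" "\<forall>s\<in>{0..T}. \<bar>f s\<bar> \<le> K"
  shows "set_integrable lborel {t..T} f"
proof -
  have m: "(\<lambda>x. indicator {0..T} x * f x) \<in> borel_measurable lborel" using assms(1) unfolding sbm_iff .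
  have "(\<lambda>x. indicator {t..T} x * (indicator {0..T} x * f x)) \<in> borel_measurable lborel"
    using m by (intro borel_measurable_times[OF _ m]) auto
  also have "(\<lambda>x. indicator {t..T} x * (indicator {0..T} x * f x)) = (\<lambda>x. indicator {t..T} x * f x)"
    using assms(2) by (auto simp: indicator_def)
  finally have mm: "(\<lambda>x. indicator {t..T} x * f x) \<in> borel_measurable lborel" .
  show ?thesis unfolding set_integrable_def
    apply (rule integrableI_bounded_set[where A="{t..T}" and B=K])
    using mm assms by (auto simp: indicator_def emeasure_lborel_Icc_eq)
qed





lemma set_int_sq_nonneg: fixes g :: "real \<Rightarrow> real" and S :: "real set" shows "0 \<le> (LINT s:S|lborel. (g s :: real)\<^sup>2)"
  unfolding set_lebesgue_integral_def by (intro Bochner_Integration.integral_nonneg) simp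

lemma adm_premium_bnd:
  assumes "adm_premium T th"
  obtains B where "\<forall>s\<in>{0..T}. 0 < th s \<and> th s \<le> B" "B > 0" "set_borel_measurable lborel {0..T} th"
proof -
  from assms obtain B where B: "\<forall>s\<in>{0..T}. 0 < th s \<and> th s \<le> B" and m: "set_borel_measurable lborel {0..T} th"
    unfolding adm_premium_def by blast
  have "\<forall>s\<in>{0..T}. 0 < th s \<and> th s \<le> max B 1" using B by fastforce
  then show ?thesis using that m by fastforce
qed

lemma bnd_ap2:
  fixes a p B :: real
  assumes "0 \<le> a" "a \<le> B" "0 \<le> p" "p \<le> 1"
  shows "0 \<le> a * p\<^sup>2" "a * p\<^sup>2 \<le> B"
proof -
  have "p\<^sup>2 \<le> 1" using assms by (simp add: power_le_one)
  then have "a * p\<^sup>2 \<le> B * 1" using assms by (intro mult_mono) auto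
  then show "a * p\<^sup>2 \<le> B" by simp
  show "0 \<le> a * p\<^sup>2" using assms by simp
qed

lemma bnd_ap2k:
  fixes a p B k :: real
  assumes "0 \<le> a" "a \<le> B" "0 \<le> p" "p \<le> 1" "0 \<le> k"
  shows "0 \<le> a * k * p\<^sup>2" "a * k * p\<^sup>2 \<le> B * k"
proof -
  have "a * p\<^sup>2 \<le> B" "0 \<le> a * p\<^sup>2" using bnd_ap2[OF assms(1-4)] by auto
  then have "a * p\<^sup>2 * k \<le> B * k" "0 \<le> a * p\<^sup>2 * k" using assms(5) by (auto intro: mult_right_mono)
  then show "0 \<le> a * k * p\<^sup>2" "a * k * p\<^sup>2 \<le> B * k" by (simp_all add: algebra_simps)
qed

lemma sq_bnd:
  fixes p q l :: real
  assumes "0 \<le> p" "p \<le> 1" "0 \<le> q" "q \<le> 1" "l \<ge> 0"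
  shows "(p - l * q)\<^sup>2 \<le> (1 + l)\<^sup>2"
proof -
  have "\<bar>p - l * q\<bar> \<le> 1 + l"
  proof -
    have "l * q \<le> l" using assms mult_left_le by blast
    moreover have "0 \<le> l * q" using assms by simp
    ultimately show ?thesis using assms by linarith
  qed
  then have "\<bar>p - l * q\<bar>\<^sup>2 \<le> (1 + l)\<^sup>2" by (intro power_mono) auto
  then show ?thesis by simp
qed

lemma J_ins_val:
  fixes th1 th2 p1 p2 :: "real \<Rightarrow> real"
  assumes "adm_premium T th1" "adm_premium T th2" "adm_reins T p1 p2" "0 \<le> t" "d0 > 0"
  shows "set_integrable lborel {t..T} (\<lambda>s. c - \<mu> - \<sigma>\<^sup>2 * f0 d0 (th1 s) (th2 s) (p1 s) (p2 s))"
    and "J_ins T \<mu> \<sigma> c d0 th1 th2 p1 p2 t x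
       = -(1 / d0) * exp (- d0 * (x + (LINT s:{t..T}|lborel. c - \<mu> - \<sigma>\<^sup>2 * f0 d0 (th1 s) (th2 s) (p1 s) (p2 s))))"
proof -
  obtain B1 where B1: "\<forall>s\<in>{0..T}. 0 < th1 s \<and> th1 s \<le> B1" "set_borel_measurable lborel {0..T} th1"
    using adm_premium_bnd[OF assms(1)] by metis
  obtain B2 where B2: "\<forall>s\<in>{0..T}. 0 < th2 s \<and> th2 s \<le> B2" "set_borel_measurable lborel {0..T} th2"
    using adm_premium_bnd[OF assms(2)] by metis
  have P: "set_borel_measurable lborel {0..T} p1" "set_borel_measurable lborel {0..T} p2"
     "\<forall>s\<in>{0..T}. 0 \<le> p1 s \<and> 0 \<le> p2 s \<and> p1 s + p2 s \<le> 1"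
    using assms(3) unfolding adm_reins_def by auto
  define E1 where "E1 s = c - \<mu> - th1 s * \<sigma>\<^sup>2 * (p1 s)\<^sup>2 - th2 s * \<sigma>\<^sup>2 * (p2 s)\<^sup>2" for s
  define E2 where "E2 s = (1 - p1 s - p2 s)\<^sup>2" for s
  have mE1: "set_borel_measurable lborel {0..T} E1"
    unfolding E1_def
    using sbm_gen[where F="\<lambda>a b p q. c - \<mu> - a * \<sigma>\<^sup>2 * p\<^sup>2 - b * \<sigma>\<^sup>2 * q\<^sup>2", OF B1(2) B2(2) P(1) P(2)]
    by simp
  have mE2: "set_borel_measurable lborel {0..T} E2"
    unfolding E2_def
    using sbm_gen[where F="\<lambda>a b p q. (1 - p - q)\<^sup>2", OF B1(2) B2(2) P(1) P(2)]
    by simp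
  have bE1: "\<forall>s\<in>{0..T}. \<bar>E1 s\<bar> \<le> \<bar>c - \<mu>\<bar> + B1 * \<sigma>\<^sup>2 + B2 * \<sigma>\<^sup>2"
  proof
    fix s assume s: "s \<in> {0..T}"
    have "0 \<le> th1 s * \<sigma>\<^sup>2 * (p1 s)\<^sup>2" "th1 s * \<sigma>\<^sup>2 * (p1 s)\<^sup>2 \<le> B1 * \<sigma>\<^sup>2"
      using bnd_ap2k[of "th1 s" B1 "p1 s" "\<sigma>\<^sup>2"] B1 P s by (auto simp del: atLeastAtMost_iff) (insert B1 P s, fastforce+)
    moreover have "0 \<le> th2 s * \<sigma>\<^sup>2 * (p2 s)\<^sup>2" "th2 s * \<sigma>\<^sup>2 * (p2 s)\<^sup>2 \<le> B2 * \<sigma>\<^sup>2"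
      using bnd_ap2k[of "th2 s" B2 "p2 s" "\<sigma>\<^sup>2"] B2 P s by (auto simp del: atLeastAtMost_iff) (insert B2 P s, fastforce+)
    ultimately show "\<bar>E1 s\<bar> \<le> \<bar>c - \<mu>\<bar> + B1 * \<sigma>\<^sup>2 + B2 * \<sigma>\<^sup>2" unfolding E1_def by linarith
  qed
  have bE2: "\<forall>s\<in>{0..T}. \<bar>E2 s\<bar> \<le> 1"
  proof
    fix s assume s: "s \<in> {0..T}"
    have "0 \<le> p1 s" "0 \<le> p2 s" "p1 s + p2 s \<le> 1" using P s by auto
    then have "0 \<le> 1 - p1 s - p2 s" "1 - p1 s - p2 s \<le> 1" by linarith+
    then have "(1 - p1 s - p2 s)\<^sup>2 \<le> 1" by (simp add: power_le_one)
    then show "\<bar>E2 s\<bar> \<le> 1" unfolding E2_def by simp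
  qed
  have iE1: "set_integrable lborel {t..T} E1" by (rule int_from_sbm[OF mE1 assms(4) bE1])
  have iE2: "set_integrable lborel {t..T} E2" by (rule int_from_sbm[OF mE2 assms(4) bE2])
  have eq: "(\<lambda>s. c - \<mu> - \<sigma>\<^sup>2 * f0 d0 (th1 s) (th2 s) (p1 s) (p2 s)) = (\<lambda>s. E1 s - (d0 * \<sigma>\<^sup>2 / 2) * E2 s)"
    unfolding E1_def E2_def f0_def by (auto simp: algebra_simps)
  have i3: "set_integrable lborel {t..T} (\<lambda>s. (d0 * \<sigma>\<^sup>2 / 2) * E2 s)" using iE2 by simp
  show "set_integrable lborel {t..T} (\<lambda>s. c - \<mu> - \<sigma>\<^sup>2 * f0 d0 (th1 s) (th2 s) (p1 s) (p2 s))"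
    unfolding eq using iE1 i3 by (rule set_integral_diff(1))
  have int: "(LINT s:{t..T}|lborel. c - \<mu> - \<sigma>\<^sup>2 * f0 d0 (th1 s) (th2 s) (p1 s) (p2 s))
      = (LINT s:{t..T}|lborel. E1 s) - (d0 * \<sigma>\<^sup>2 / 2) * (LINT s:{t..T}|lborel. E2 s)"
    unfolding eq set_integral_diff(2)[OF iE1 i3] by simp
  have v: "0 \<le> \<sigma>\<^sup>2 * (LINT s:{t..T}|lborel. E2 s)" unfolding E2_def
    using set_int_sq_nonneg[of "{t..T}" "\<lambda>s. 1 - p1 s - p2 s"] by simp
  have "J_ins T \<mu> \<sigma> c d0 th1 th2 p1 p2 t x = gauss_EU (U_exp d0) (x + (LINT s:{t..T}|lborel. E1 s)) (\<sigma>\<^sup>2 * (LINT s:{t..T}|lborel. E2 s))"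
    unfolding J_ins_def E1_def E2_def by simp
  also have "\<dots> = -(1 / d0) * exp (- d0 * (x + (LINT s:{t..T}|lborel. E1 s)) + d0\<^sup>2 * (\<sigma>\<^sup>2 * (LINT s:{t..T}|lborel. E2 s)) / 2)"
    by (rule gauss_exp[OF assms(5) v])
  also have "- d0 * (x + (LINT s:{t..T}|lborel. E1 s)) + d0\<^sup>2 * (\<sigma>\<^sup>2 * (LINT s:{t..T}|lborel. E2 s)) / 2
      = - d0 * (x + (LINT s:{t..T}|lborel. c - \<mu> - \<sigma>\<^sup>2 * f0 d0 (th1 s) (th2 s) (p1 s) (p2 s)))"
    unfolding int by (simp add: power2_eq_square algebra_simps)
  finally show "J_ins T \<mu> \<sigma> c d0 th1 th2 p1 p2 t x
       = -(1 / d0) * exp (- d0 * (x + (LINT s:{t..T}|lborel. c - \<mu> - \<sigma>\<^sup>2 * f0 d0 (th1 s) (th2 s) (p1 s) (p2 s))))" .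
qed

lemma J_re_val:
  fixes thi thj pp pq :: "real \<Rightarrow> real"
  assumes "adm_premium T thi" "adm_premium T thj" "adm_reins T pp pq" "0 \<le> t" "di > 0" "lj \<ge> 0"
  shows "set_integrable lborel {t..T} (\<lambda>s. \<sigma>\<^sup>2 * G di lj (thi s) (thj s) (pp s) (pq s))"
    and "J_re T \<sigma> di lj thi thj pp pq t y
       = -(1 / di) * exp (- di * (y + (LINT s:{t..T}|lborel. \<sigma>\<^sup>2 * G di lj (thi s) (thj s) (pp s) (pq s))))"
proof -
  obtain B1 where B1: "\<forall>s\<in>{0..T}. 0 < thi s \<and> thi s \<le> B1" "set_borel_measurable lborel {0..T} thi"
    using adm_premium_bnd[OF assms(1)] by metis
  obtain B2 where B2: "\<forall>s\<in>{0..T}. 0 < thj s \<and> thj s \<le> B2" "set_borel_measurable lborel {0..T} thj"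
    using adm_premium_bnd[OF assms(2)] by metis
  have P: "set_borel_measurable lborel {0..T} pp" "set_borel_measurable lborel {0..T} pq"
     "\<forall>s\<in>{0..T}. 0 \<le> pp s \<and> 0 \<le> pq s \<and> pp s \<le> 1 \<and> pq s \<le> 1"
    using assms(3) unfolding adm_reins_def by auto
  define E1 where "E1 s = thi s * \<sigma>\<^sup>2 * (pp s)\<^sup>2 - lj * (thj s * \<sigma>\<^sup>2 * (pq s)\<^sup>2)" for s
  define E2 where "E2 s = (pp s - lj * pq s)\<^sup>2" for s
  have mE1: "set_borel_measurable lborel {0..T} E1"
    unfolding E1_def
    using sbm_gen[where F="\<lambda>a b p q. a * \<sigma>\<^sup>2 * p\<^sup>2 - lj * (b * \<sigma>\<^sup>2 * q\<^sup>2)", OF B1(2) B2(2) P(1) P(2)]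
    by simp
  have mE2: "set_borel_measurable lborel {0..T} E2"
    unfolding E2_def
    using sbm_gen[where F="\<lambda>a b p q. (p - lj * q)\<^sup>2", OF B1(2) B2(2) P(1) P(2)]
    by simp
  have bE1: "\<forall>s\<in>{0..T}. \<bar>E1 s\<bar> \<le> B1 * \<sigma>\<^sup>2 + lj * (B2 * \<sigma>\<^sup>2)"
  proof
    fix s assume s: "s \<in> {0..T}"
    have h1: "0 \<le> thi s" "thi s \<le> B1" "0 \<le> pp s" "pp s \<le> 1" using B1 P s by (auto simp del: atLeastAtMost_iff)
    have h2: "0 \<le> thj s" "thj s \<le> B2" "0 \<le> pq s" "pq s \<le> 1" using B2 P s by (auto simp del: atLeastAtMost_iff)
    have a: "0 \<le> thi s * \<sigma>\<^sup>2 * (pp s)\<^sup>2" "thi s * \<sigma>\<^sup>2 * (pp s)\<^sup>2 \<le> B1 * \<sigma>\<^sup>2"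
      using bnd_ap2k[OF h1] by auto
    have b: "0 \<le> thj s * \<sigma>\<^sup>2 * (pq s)\<^sup>2" "thj s * \<sigma>\<^sup>2 * (pq s)\<^sup>2 \<le> B2 * \<sigma>\<^sup>2"
      using bnd_ap2k[OF h2] by auto
    have c: "0 \<le> lj * (thj s * \<sigma>\<^sup>2 * (pq s)\<^sup>2)" "lj * (thj s * \<sigma>\<^sup>2 * (pq s)\<^sup>2) \<le> lj * (B2 * \<sigma>\<^sup>2)"
      using b assms(6) by (auto intro: mult_left_mono)
    show "\<bar>E1 s\<bar> \<le> B1 * \<sigma>\<^sup>2 + lj * (B2 * \<sigma>\<^sup>2)" unfolding E1_def using a c by linarith
  qed
  have bE2: "\<forall>s\<in>{0..T}. \<bar>E2 s\<bar> \<le> (1 + lj)\<^sup>2"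
    unfolding E2_def using sq_bnd P assms(6) by auto
  have iE1: "set_integrable lborel {t..T} E1" by (rule int_from_sbm[OF mE1 assms(4) bE1])
  have iE2: "set_integrable lborel {t..T} E2" by (rule int_from_sbm[OF mE2 assms(4) bE2])
  have eq: "(\<lambda>s. \<sigma>\<^sup>2 * G di lj (thi s) (thj s) (pp s) (pq s)) = (\<lambda>s. E1 s - (di * \<sigma>\<^sup>2 / 2) * E2 s)"
    unfolding E1_def E2_def G_def by (auto simp: algebra_simps)
  have i3: "set_integrable lborel {t..T} (\<lambda>s. (di * \<sigma>\<^sup>2 / 2) * E2 s)" using iE2 by simp
  show "set_integrable lborel {t..T} (\<lambda>s. \<sigma>\<^sup>2 * G di lj (thi s) (thj s) (pp s) (pq s))"
    unfolding eq using iE1 i3 by (rule set_integral_diff(1))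
  have int: "(LINT s:{t..T}|lborel. \<sigma>\<^sup>2 * G di lj (thi s) (thj s) (pp s) (pq s))
      = (LINT s:{t..T}|lborel. E1 s) - (di * \<sigma>\<^sup>2 / 2) * (LINT s:{t..T}|lborel. E2 s)"
    unfolding eq set_integral_diff(2)[OF iE1 i3] by simp
  have v: "0 \<le> \<sigma>\<^sup>2 * (LINT s:{t..T}|lborel. E2 s)" unfolding E2_def
    using set_int_sq_nonneg[of "{t..T}" "\<lambda>s. pp s - lj * pq s"] by simp
  have "J_re T \<sigma> di lj thi thj pp pq t y = gauss_EU (U_exp di) (y + (LINT s:{t..T}|lborel. E1 s)) (\<sigma>\<^sup>2 * (LINT s:{t..T}|lborel. E2 s))"
    unfolding J_re_def E1_def E2_def by simp
  also have "\<dots> = -(1 / di) * exp (- di * (y + (LINT s:{t..T}|lborel. E1 s)) + di\<^sup>2 * (\<sigma>\<^sup>2 * (LINT s:{t..T}|lborel. E2 s)) / 2)"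
    by (rule gauss_exp[OF assms(5) v])
  also have "- di * (y + (LINT s:{t..T}|lborel. E1 s)) + di\<^sup>2 * (\<sigma>\<^sup>2 * (LINT s:{t..T}|lborel. E2 s)) / 2
      = - di * (y + (LINT s:{t..T}|lborel. \<sigma>\<^sup>2 * G di lj (thi s) (thj s) (pp s) (pq s)))"
    unfolding int by (simp add: power2_eq_square algebra_simps)
  finally show "J_re T \<sigma> di lj thi thj pp pq t y
       = -(1 / di) * exp (- di * (y + (LINT s:{t..T}|lborel. \<sigma>\<^sup>2 * G di lj (thi s) (thj s) (pp s) (pq s))))" .
qed



lemma adm_P:
  assumes "adm_premium T th1" "adm_premium T th2" "d0 > 0"
  shows "adm_reins T (\<lambda>s. P1 d0 (th1 s) (th2 s)) (\<lambda>s. P2 d0 (th1 s) (th2 s))"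
proof -
  obtain B1 where B1: "\<forall>s\<in>{0..T}. 0 < th1 s \<and> th1 s \<le> B1" "set_borel_measurable lborel {0..T} th1"
    using adm_premium_bnd[OF assms(1)] by metis
  obtain B2 where B2: "\<forall>s\<in>{0..T}. 0 < th2 s \<and> th2 s \<le> B2" "set_borel_measurable lborel {0..T} th2"
    using adm_premium_bnd[OF assms(2)] by metis
  have m1: "set_borel_measurable lborel {0..T} (\<lambda>s. P1 d0 (th1 s) (th2 s))"
    using sbm_gen[where F="\<lambda>a b p q. P1 d0 a b", OF B1(2) B2(2) B1(2) B2(2)]
    by (simp add: P1_def)
  have m2: "set_borel_measurable lborel {0..T} (\<lambda>s. P2 d0 (th1 s) (th2 s))"
    using sbm_gen[where F="\<lambda>a b p q. P2 d0 a b", OF B1(2) B2(2) B1(2) B2(2)]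
    by (simp add: P2_def)
  have bnds: "\<forall>s\<in>{0..T}. 0 \<le> P1 d0 (th1 s) (th2 s) \<and> 0 \<le> P2 d0 (th1 s) (th2 s) \<and> P1 d0 (th1 s) (th2 s) + P2 d0 (th1 s) (th2 s) \<le> 1"
  proof
    fix s assume s: "s \<in> {0..T}"
    then have "0 < th1 s" "0 < th2 s" using B1(1) B2(1) by auto
    then show "0 \<le> P1 d0 (th1 s) (th2 s) \<and> 0 \<le> P2 d0 (th1 s) (th2 s) \<and> P1 d0 (th1 s) (th2 s) + P2 d0 (th1 s) (th2 s) \<le> 1"
      using P_bounds[OF assms(3)] by blast
  qed
  show ?thesis unfolding adm_reins_def using m1 m2 bnds by (intro conjI)
qed

lemma ins_suff:
  assumes "adm_premium T th1" "adm_premium T th2" "d0 > 0"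
  shows "ins_opt T \<mu> \<sigma> c d0 th1 th2 (\<lambda>s. P1 d0 (th1 s) (th2 s)) (\<lambda>s. P2 d0 (th1 s) (th2 s))"
  unfolding ins_opt_def
proof (intro conjI ballI allI impI)
  show a: "adm_reins T (\<lambda>s. P1 d0 (th1 s) (th2 s)) (\<lambda>s. P2 d0 (th1 s) (th2 s))"
    using adm_P assms by blast
  fix t x q1 q2 assume t: "t \<in> {0..T}" and q: "adm_reins T q1 q2"
  have th: "\<forall>s\<in>{0..T}. 0 < th1 s \<and> 0 < th2 s" using assms unfolding adm_premium_def by blast
  have "(LINT s:{t..T}|lborel. c - \<mu> - \<sigma>\<^sup>2 * f0 d0 (th1 s) (th2 s) (q1 s) (q2 s))
     \<le> (LINT s:{t..T}|lborel. c - \<mu> - \<sigma>\<^sup>2 * f0 d0 (th1 s) (th2 s) (P1 d0 (th1 s) (th2 s)) (P2 d0 (th1 s) (th2 s)))"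
  proof (rule set_integral_mono)
    show "set_integrable lborel {t..T} (\<lambda>s. c - \<mu> - \<sigma>\<^sup>2 * f0 d0 (th1 s) (th2 s) (q1 s) (q2 s))"
      using J_ins_val(1)[OF assms(1,2) q _ assms(3)] t by auto
    show "set_integrable lborel {t..T} (\<lambda>s. c - \<mu> - \<sigma>\<^sup>2 * f0 d0 (th1 s) (th2 s) (P1 d0 (th1 s) (th2 s)) (P2 d0 (th1 s) (th2 s)))"
      using J_ins_val(1)[OF assms(1,2) a _ assms(3)] t by auto
    fix s assume s: "s \<in> {t..T}"
    then have "0 < th1 s" "0 < th2 s" using th t by auto
    then have "f0 d0 (th1 s) (th2 s) (P1 d0 (th1 s) (th2 s)) (P2 d0 (th1 s) (th2 s)) \<le> f0 d0 (th1 s) (th2 s) (q1 s) (q2 s)"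
      using ins_pt(1) assms(3) by blast
    then show "c - \<mu> - \<sigma>\<^sup>2 * f0 d0 (th1 s) (th2 s) (q1 s) (q2 s)
       \<le> c - \<mu> - \<sigma>\<^sup>2 * f0 d0 (th1 s) (th2 s) (P1 d0 (th1 s) (th2 s)) (P2 d0 (th1 s) (th2 s))"
      by (simp add: mult_left_mono)
  qed
  moreover have t0: "0 \<le> t" using t by simp
  ultimately show "J_ins T \<mu> \<sigma> c d0 th1 th2 q1 q2 t x \<le> J_ins T \<mu> \<sigma> c d0 th1 th2 (\<lambda>s. P1 d0 (th1 s) (th2 s)) (\<lambda>s. P2 d0 (th1 s) (th2 s)) t x"
    unfolding J_ins_val(2)[OF assms(1,2) q t0 assms(3)] J_ins_val(2)[OF assms(1,2) a t0 assms(3)] U_mono[OF assms(3)]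
    by simp
qed

lemma ae_eq_int:
  fixes f g :: "real \<Rightarrow> real"
  assumes S: "S \<in> sets lborel" and i: "set_integrable lborel S f" "set_integrable lborel S g"
    and le: "\<And>s. s \<in> S \<Longrightarrow> f s \<le> g s"
    and I: "(LINT s:S|lborel. g s) \<le> (LINT s:S|lborel. f s)"
  shows "AE s in lborel. s \<in> S \<longrightarrow> f s = g s"
proof -
  have ih: "set_integrable lborel S (\<lambda>s. g s - f s)" by (rule set_integral_diff(1)[OF i(2) i(1)])
  then have ih': "integrable lborel (\<lambda>s. indicator S s * (g s - f s))"
    unfolding set_integrable_def by (simp add: scaleR_conv_of_real)
  have nn: "AE s in lborel. 0 \<le> indicator S s * (g s - f s)"
    using le by (auto simp: indicator_def)
  have "(LINT s:S|lborel. g s - f s) = (LINT s:S|lborel. g s) - (LINT s:S|lborel. f s)"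
    by (rule set_integral_diff(2)[OF i(2) i(1)])
  moreover have "(LINT s:S|lborel. g s - f s) = integral\<^sup>L lborel (\<lambda>s. indicator S s * (g s - f s))"
    unfolding set_lebesgue_integral_def by (simp add: scaleR_conv_of_real)
  moreover have "0 \<le> integral\<^sup>L lborel (\<lambda>s. indicator S s * (g s - f s))"
    using nn by (rule integral_nonneg_AE)
  ultimately have "integral\<^sup>L lborel (\<lambda>s. indicator S s * (g s - f s)) = 0" using I by linarith
  then have "AE s in lborel. indicator S s * (g s - f s) = 0"
    using integral_nonneg_eq_0_iff_AE[OF ih' nn] by simp
  then show ?thesis by eventually_elim (auto simp: indicator_def)
qed

lemma ins_nec:
  assumes "adm_premium T th1" "adm_premium T th2" "d0 > 0" "\<sigma> > 0" "T \<ge> 0"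
    and opt: "ins_opt T \<mu> \<sigma> c d0 th1 th2 q1 q2"
  shows "AE s in lborel. s \<in> {0..T} \<longrightarrow> q1 s = P1 d0 (th1 s) (th2 s) \<and> q2 s = P2 d0 (th1 s) (th2 s)"
proof -
  have a: "adm_reins T (\<lambda>s. P1 d0 (th1 s) (th2 s)) (\<lambda>s. P2 d0 (th1 s) (th2 s))"
    using adm_P assms by blast
  have q: "adm_reins T q1 q2" using opt unfolding ins_opt_def by blast
  have "J_ins T \<mu> \<sigma> c d0 th1 th2 (\<lambda>s. P1 d0 (th1 s) (th2 s)) (\<lambda>s. P2 d0 (th1 s) (th2 s)) 0 0 \<le> J_ins T \<mu> \<sigma> c d0 th1 th2 q1 q2 0 0"
    using opt a assms(5) unfolding ins_opt_def by auto
  then have I: "(LINT s:{0..T}|lborel. c - \<mu> - \<sigma>\<^sup>2 * f0 d0 (th1 s) (th2 s) (P1 d0 (th1 s) (th2 s)) (P2 d0 (th1 s) (th2 s)))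
     \<le> (LINT s:{0..T}|lborel. c - \<mu> - \<sigma>\<^sup>2 * f0 d0 (th1 s) (th2 s) (q1 s) (q2 s))"
    unfolding J_ins_val(2)[OF assms(1,2) q order_refl assms(3)] J_ins_val(2)[OF assms(1,2) a order_refl assms(3)] U_mono[OF assms(3)]
    by simp
  have th: "\<forall>s\<in>{0..T}. 0 < th1 s \<and> 0 < th2 s" using assms unfolding adm_premium_def by blast
  have "AE s in lborel. s \<in> {0..T} \<longrightarrow>
      c - \<mu> - \<sigma>\<^sup>2 * f0 d0 (th1 s) (th2 s) (q1 s) (q2 s) =
      c - \<mu> - \<sigma>\<^sup>2 * f0 d0 (th1 s) (th2 s) (P1 d0 (th1 s) (th2 s)) (P2 d0 (th1 s) (th2 s))"
  proof (rule ae_eq_int[OF _ _ _ _ I])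
    show "set_integrable lborel {0..T} (\<lambda>s. c - \<mu> - \<sigma>\<^sup>2 * f0 d0 (th1 s) (th2 s) (q1 s) (q2 s))"
      using J_ins_val(1)[OF assms(1,2) q _ assms(3)] by auto
    show "set_integrable lborel {0..T} (\<lambda>s. c - \<mu> - \<sigma>\<^sup>2 * f0 d0 (th1 s) (th2 s) (P1 d0 (th1 s) (th2 s)) (P2 d0 (th1 s) (th2 s)))"
      using J_ins_val(1)[OF assms(1,2) a _ assms(3)] by auto
    fix s assume s: "s \<in> {0..T}"
    then have "0 < th1 s" "0 < th2 s" using th by auto
    then have "f0 d0 (th1 s) (th2 s) (P1 d0 (th1 s) (th2 s)) (P2 d0 (th1 s) (th2 s)) \<le> f0 d0 (th1 s) (th2 s) (q1 s) (q2 s)"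
      using ins_pt(1) assms(3) by blast
    then show "c - \<mu> - \<sigma>\<^sup>2 * f0 d0 (th1 s) (th2 s) (q1 s) (q2 s)
       \<le> c - \<mu> - \<sigma>\<^sup>2 * f0 d0 (th1 s) (th2 s) (P1 d0 (th1 s) (th2 s)) (P2 d0 (th1 s) (th2 s))"
      by (simp add: mult_left_mono)
  qed simp
  then show ?thesis
  proof eventually_elim
    case (elim s)
    show ?case
    proof
      assume s: "s \<in> {0..T}"
      then have "0 < th1 s" "0 < th2 s" using th by auto
      moreover have "f0 d0 (th1 s) (th2 s) (q1 s) (q2 s) = f0 d0 (th1 s) (th2 s) (P1 d0 (th1 s) (th2 s)) (P2 d0 (th1 s) (th2 s))"
        using elim s assms(4) by simp
      ultimately show "q1 s = P1 d0 (th1 s) (th2 s) \<and> q2 s = P2 d0 (th1 s) (th2 s)"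
        using ins_pt(2) assms(3) by blast
    qed
  qed
qed



definition half where
  "half T \<mu> \<sigma> c d0 d l thi thj pa pb \<longleftrightarrow>
     (\<forall>thi' qi qj. adm_premium T thi' \<and> ins_opt T \<mu> \<sigma> c d0 thi' thj qi qj \<longrightarrow>
        (\<forall>t\<in>{0..T}. \<forall>y. J_re T \<sigma> d l thi' thj qi qj t y \<le> J_re T \<sigma> d l thi thj pa pb t y))"

lemma J_ins_swap: "J_ins T \<mu> \<sigma> c d0 th1 th2 p1 p2 t x = J_ins T \<mu> \<sigma> c d0 th2 th1 p2 p1 t x"
proof -
  have e1: "(\<lambda>s. c - \<mu> - th1 s * \<sigma>\<^sup>2 * (p1 s)\<^sup>2 - th2 s * \<sigma>\<^sup>2 * (p2 s)\<^sup>2)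
      = (\<lambda>s. c - \<mu> - th2 s * \<sigma>\<^sup>2 * (p2 s)\<^sup>2 - th1 s * \<sigma>\<^sup>2 * (p1 s)\<^sup>2)" by (auto simp: algebra_simps)
  have e2: "(\<lambda>s. (1 - p1 s - p2 s)\<^sup>2) = (\<lambda>s. (1 - p2 s - p1 s)\<^sup>2)" by (auto simp: algebra_simps)
  show ?thesis unfolding J_ins_def e1 e2 ..
qed

lemma adm_reins_swap: "adm_reins T p1 p2 = adm_reins T p2 p1"
  unfolding adm_reins_def by (auto simp: add.commute)

lemma ins_opt_swap: "ins_opt T \<mu> \<sigma> c d0 th1 th2 p1 p2 = ins_opt T \<mu> \<sigma> c d0 th2 th1 p2 p1"
  unfolding ins_opt_def
  by (metis (no_types, lifting) J_ins_swap adm_reins_swap)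

lemma eq_iff:
  "is_equilibrium T \<mu> \<sigma> c d0 d1 d2 l1 l2 th1 th2 p1 p2 \<longleftrightarrow>
     adm_premium T th1 \<and> adm_premium T th2 \<and> ins_opt T \<mu> \<sigma> c d0 th1 th2 p1 p2 \<and>
     half T \<mu> \<sigma> c d0 d1 l2 th1 th2 p1 p2 \<and> half T \<mu> \<sigma> c d0 d2 l1 th2 th1 p2 p1"
proof -
  have "(\<forall>th2' q1 q2. adm_premium T th2' \<and> ins_opt T \<mu> \<sigma> c d0 th1 th2' q1 q2 \<longrightarrow>
        (\<forall>t\<in>{0..T}. \<forall>y. J_re T \<sigma> d2 l1 th2' th1 q2 q1 t y \<le> J_re T \<sigma> d2 l1 th2 th1 p2 p1 t y))
     \<longleftrightarrow> half T \<mu> \<sigma> c d0 d2 l1 th2 th1 p2 p1"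
    unfolding half_def
  proof (intro iffI allI impI)
    fix thi' qi qj
    assume H: "\<forall>th2' q1 q2. adm_premium T th2' \<and> ins_opt T \<mu> \<sigma> c d0 th1 th2' q1 q2 \<longrightarrow>
        (\<forall>t\<in>{0..T}. \<forall>y. J_re T \<sigma> d2 l1 th2' th1 q2 q1 t y \<le> J_re T \<sigma> d2 l1 th2 th1 p2 p1 t y)"
      and A: "adm_premium T thi' \<and> ins_opt T \<mu> \<sigma> c d0 thi' th1 qi qj"
    then show "\<forall>t\<in>{0..T}. \<forall>y. J_re T \<sigma> d2 l1 thi' th1 qi qj t y \<le> J_re T \<sigma> d2 l1 th2 th1 p2 p1 t y"
      using ins_opt_swap[of T \<mu> \<sigma> c d0 thi' th1 qi qj] by blast
  next
    fix th2' q1 q2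
    assume H: "\<forall>thi' qi qj. adm_premium T thi' \<and> ins_opt T \<mu> \<sigma> c d0 thi' th1 qi qj \<longrightarrow>
        (\<forall>t\<in>{0..T}. \<forall>y. J_re T \<sigma> d2 l1 thi' th1 qi qj t y \<le> J_re T \<sigma> d2 l1 th2 th1 p2 p1 t y)"
      and A: "adm_premium T th2' \<and> ins_opt T \<mu> \<sigma> c d0 th1 th2' q1 q2"
    then show "\<forall>t\<in>{0..T}. \<forall>y. J_re T \<sigma> d2 l1 th2' th1 q2 q1 t y \<le> J_re T \<sigma> d2 l1 th2 th1 p2 p1 t y"
      using ins_opt_swap[of T \<mu> \<sigma> c d0 th1 th2' q1 q2] by blast
  qed
  then show ?thesis unfolding is_equilibrium_def half_def[of T \<mu> \<sigma> c d0 d1 l2] by blast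
qed

lemma set_int_cong_AE:
  fixes f g :: "real \<Rightarrow> real"
  assumes "set_integrable lborel S f" "set_integrable lborel S g" "AE s in lborel. s \<in> S \<longrightarrow> f s = g s"
  shows "(LINT s:S|lborel. f s) = (LINT s:S|lborel. g s)"
  unfolding set_lebesgue_integral_def
proof (rule integral_cong_AE)
  show "(\<lambda>x. indicat_real S x *\<^sub>R f x) \<in> borel_measurable lborel"
    using assms(1) unfolding set_integrable_def by (rule borel_measurable_integrable)
  show "(\<lambda>x. indicat_real S x *\<^sub>R g x) \<in> borel_measurable lborel"
    using assms(2) unfolding set_integrable_def by (rule borel_measurable_integrable)
  show "AE x in lborel. indicat_real S x *\<^sub>R f x = indicat_real S x *\<^sub>R g x"
    using assms(3) by eventually_elim (auto simp: indicator_def)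
qed

lemma adm_const: "a > 0 \<Longrightarrow> adm_premium T (\<lambda>_. a)"
  unfolding adm_premium_def sbm_iff by auto

lemma half_nec:
  assumes pos: "d0 > 0" "d > 0" "l > 0" "\<sigma> > 0" "T \<ge> 0"
    and A: "adm_premium T thi" "adm_premium T thj" and opt: "ins_opt T \<mu> \<sigma> c d0 thi thj pa pb"
    and H: "half T \<mu> \<sigma> c d0 d l thi thj pa pb"
  shows "AE s in lborel. s \<in> {0..T} \<longrightarrow> thi s = phi d0 d l (thj s)"
proof -
  obtain B2 where B2: "\<forall>s\<in>{0..T}. 0 < thj s \<and> thj s \<le> B2" "set_borel_measurable lborel {0..T} thj"
    using adm_premium_bnd[OF A(2)] by metis
  have thi0: "\<forall>s\<in>{0..T}. 0 < thi s" using A(1) unfolding adm_premium_def by blast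
  define th' where "th' s = phi d0 d l (thj s)" for s
  have m: "set_borel_measurable lborel {0..T} th'"
    unfolding th'_def
    using sbm_gen[where F="\<lambda>a b p q. phi d0 d l b", OF B2(2) B2(2) B2(2) B2(2)]
    by (simp add: phi_def)
  have bnd: "\<forall>s\<in>{0..T}. 0 < th' s \<and> th' s \<le> Mb d0 d l"
    unfolding th'_def using B2(1) phi_pos[OF pos(1-3)] phi_bound[OF pos(1-3)] by (auto simp del: atLeastAtMost_iff)
  have A': "adm_premium T th'" unfolding adm_premium_def using m bnd by blast
  define qh1 where "qh1 s = P1 d0 (th' s) (thj s)" for s
  define qh2 where "qh2 s = P2 d0 (th' s) (thj s)" for s
  have oq: "ins_opt T \<mu> \<sigma> c d0 th' thj qh1 qh2"
    unfolding qh1_def qh2_def by (rule ins_suff[OF A' A(2) pos(1)])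
  have aq: "adm_reins T qh1 qh2" unfolding qh1_def qh2_def by (rule adm_P[OF A' A(2) pos(1)])
  have ap: "adm_reins T pa pb" using opt unfolding ins_opt_def by blast
  define ph1 where "ph1 s = P1 d0 (thi s) (thj s)" for s
  define ph2 where "ph2 s = P2 d0 (thi s) (thj s)" for s
  have aph: "adm_reins T ph1 ph2" unfolding ph1_def ph2_def by (rule adm_P[OF A pos(1)])
  have "J_re T \<sigma> d l th' thj qh1 qh2 0 0 \<le> J_re T \<sigma> d l thi thj pa pb 0 0"
    using H A' oq pos(5) unfolding half_def by auto
  then have I1: "(LINT s:{0..T}|lborel. \<sigma>\<^sup>2 * G d l (th' s) (thj s) (qh1 s) (qh2 s))
      \<le> (LINT s:{0..T}|lborel. \<sigma>\<^sup>2 * G d l (thi s) (thj s) (pa s) (pb s))"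
    unfolding J_re_val(2)[OF A' A(2) aq order_refl pos(2) less_imp_le[OF pos(3)]]
      J_re_val(2)[OF A ap order_refl pos(2) less_imp_le[OF pos(3)]] U_mono[OF pos(2)]
    by simp
  have ae: "AE s in lborel. s \<in> {0..T} \<longrightarrow> pa s = ph1 s \<and> pb s = ph2 s"
    unfolding ph1_def ph2_def by (rule ins_nec[OF A pos(1) pos(4) pos(5) opt])
  have ae2: "AE s in lborel. s \<in> {0..T} \<longrightarrow>
      \<sigma>\<^sup>2 * G d l (thi s) (thj s) (pa s) (pb s) = \<sigma>\<^sup>2 * G d l (thi s) (thj s) (ph1 s) (ph2 s)"
    using ae by eventually_elim auto
  have I2: "(LINT s:{0..T}|lborel. \<sigma>\<^sup>2 * G d l (thi s) (thj s) (pa s) (pb s))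
      = (LINT s:{0..T}|lborel. \<sigma>\<^sup>2 * G d l (thi s) (thj s) (ph1 s) (ph2 s))"
    by (rule set_int_cong_AE[OF J_re_val(1)[OF A ap order_refl pos(2) less_imp_le[OF pos(3)]]
        J_re_val(1)[OF A aph order_refl pos(2) less_imp_le[OF pos(3)]] ae2])
  have "AE s in lborel. s \<in> {0..T} \<longrightarrow>
      \<sigma>\<^sup>2 * G d l (thi s) (thj s) (ph1 s) (ph2 s) = \<sigma>\<^sup>2 * G d l (th' s) (thj s) (qh1 s) (qh2 s)"
  proof (rule ae_eq_int)
    show "set_integrable lborel {0..T} (\<lambda>s. \<sigma>\<^sup>2 * G d l (thi s) (thj s) (ph1 s) (ph2 s))"
      by (rule J_re_val(1)[OF A aph order_refl pos(2) less_imp_le[OF pos(3)]])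
    show "set_integrable lborel {0..T} (\<lambda>s. \<sigma>\<^sup>2 * G d l (th' s) (thj s) (qh1 s) (qh2 s))"
      by (rule J_re_val(1)[OF A' A(2) aq order_refl pos(2) less_imp_le[OF pos(3)]])
    show "(LINT s:{0..T}|lborel. \<sigma>\<^sup>2 * G d l (th' s) (thj s) (qh1 s) (qh2 s))
      \<le> (LINT s:{0..T}|lborel. \<sigma>\<^sup>2 * G d l (thi s) (thj s) (ph1 s) (ph2 s))"
      using I1 I2 by linarith
    fix s assume s: "s \<in> {0..T}"
    then have "0 < thi s" "0 < thj s" using thi0 B2(1) by auto
    then have "G d l (thi s) (thj s) (ph1 s) (ph2 s) \<le> G d l (th' s) (thj s) (qh1 s) (qh2 s)"
      unfolding ph1_def ph2_def qh1_def qh2_def th'_def using re_pt(1)[OF pos(1-3)] by blast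
    then show "\<sigma>\<^sup>2 * G d l (thi s) (thj s) (ph1 s) (ph2 s) \<le> \<sigma>\<^sup>2 * G d l (th' s) (thj s) (qh1 s) (qh2 s)"
      by (simp add: mult_left_mono)
  qed simp
  then show ?thesis
  proof eventually_elim
    case (elim s)
    show ?case
    proof
      assume s: "s \<in> {0..T}"
      then have p: "0 < thi s" "0 < thj s" using thi0 B2(1) by auto
      have "G d l (thi s) (thj s) (ph1 s) (ph2 s) = G d l (th' s) (thj s) (qh1 s) (qh2 s)"
        using elim s pos(4) by simp
      then show "thi s = phi d0 d l (thj s)"
        unfolding ph1_def ph2_def qh1_def qh2_def th'_def using re_pt(2)[OF pos(1-3) p] by blast
    qed
  qed
qed



lemma half_suff:
  assumes pos: "d0 > 0" "d > 0" "l > 0" "\<sigma> > 0" "T \<ge> 0"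
    and ab: "a > 0" "b > 0" "a = phi d0 d l b"
  shows "half T \<mu> \<sigma> c d0 d l (\<lambda>_. a) (\<lambda>_. b) (\<lambda>_. P1 d0 a b) (\<lambda>_. P2 d0 a b)"
  unfolding half_def
proof (intro allI impI ballI)
  fix thi' qi qj t y
  assume H: "adm_premium T thi' \<and> ins_opt T \<mu> \<sigma> c d0 thi' (\<lambda>_. b) qi qj" and t: "t \<in> {0..T}"
  have A': "adm_premium T thi'" and opt: "ins_opt T \<mu> \<sigma> c d0 thi' (\<lambda>_. b) qi qj" using H by auto
  have Aa: "adm_premium T (\<lambda>_. a)" and Ab: "adm_premium T (\<lambda>_. b)" using adm_const ab by auto
  have aq: "adm_reins T qi qj" using opt unfolding ins_opt_def by blast
  have ac: "adm_reins T (\<lambda>_. P1 d0 a b) (\<lambda>_. P2 d0 a b)" using adm_P[OF Aa Ab pos(1)] by simp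
  have aqh: "adm_reins T (\<lambda>s. P1 d0 (thi' s) b) (\<lambda>s. P2 d0 (thi' s) b)" using adm_P[OF A' Ab pos(1)] by simp
  have t0: "0 \<le> t" using t by simp
  have l0: "0 \<le> l" using pos by simp
  have th0: "\<forall>s\<in>{0..T}. 0 < thi' s" using A' unfolding adm_premium_def by blast
  have ae: "AE s in lborel. s \<in> {0..T} \<longrightarrow> qi s = P1 d0 (thi' s) b \<and> qj s = P2 d0 (thi' s) b"
    using ins_nec[OF A' Ab pos(1) pos(4) pos(5) opt] by simp
  have ae2: "AE s in lborel. s \<in> {t..T} \<longrightarrow>
     \<sigma>\<^sup>2 * G d l (thi' s) b (qi s) (qj s) = \<sigma>\<^sup>2 * G d l (thi' s) b (P1 d0 (thi' s) b) (P2 d0 (thi' s) b)"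
    using ae by eventually_elim (use t0 in auto)
  have i1: "set_integrable lborel {t..T} (\<lambda>s. \<sigma>\<^sup>2 * G d l (thi' s) b (qi s) (qj s))"
    using J_re_val(1)[OF A' Ab aq t0 pos(2) l0] by simp
  have i2: "set_integrable lborel {t..T} (\<lambda>s. \<sigma>\<^sup>2 * G d l (thi' s) b (P1 d0 (thi' s) b) (P2 d0 (thi' s) b))"
    using J_re_val(1)[OF A' Ab aqh t0 pos(2) l0] by simp
  have i3: "set_integrable lborel {t..T} (\<lambda>s. \<sigma>\<^sup>2 * G d l a b (P1 d0 a b) (P2 d0 a b))"
    using J_re_val(1)[OF Aa Ab ac t0 pos(2) l0] by simp
  have I: "(LINT s:{t..T}|lborel. \<sigma>\<^sup>2 * G d l (thi' s) b (qi s) (qj s))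
     = (LINT s:{t..T}|lborel. \<sigma>\<^sup>2 * G d l (thi' s) b (P1 d0 (thi' s) b) (P2 d0 (thi' s) b))"
    by (rule set_int_cong_AE[OF i1 i2 ae2])
  have M: "(LINT s:{t..T}|lborel. \<sigma>\<^sup>2 * G d l (thi' s) b (P1 d0 (thi' s) b) (P2 d0 (thi' s) b))
     \<le> (LINT s:{t..T}|lborel. \<sigma>\<^sup>2 * G d l a b (P1 d0 a b) (P2 d0 a b))"
  proof (rule set_integral_mono[OF i2 i3])
    fix s assume s: "s \<in> {t..T}"
    then have "0 < thi' s" using th0 t0 by auto
    then have "G d l (thi' s) b (P1 d0 (thi' s) b) (P2 d0 (thi' s) b) \<le> G d l a b (P1 d0 a b) (P2 d0 a b)"
      using re_pt(1)[OF pos(1-3) _ ab(2)] ab(3) by blast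
    then show "\<sigma>\<^sup>2 * G d l (thi' s) b (P1 d0 (thi' s) b) (P2 d0 (thi' s) b) \<le> \<sigma>\<^sup>2 * G d l a b (P1 d0 a b) (P2 d0 a b)"
      by (simp add: mult_left_mono)
  qed
  have J1: "J_re T \<sigma> d l thi' (\<lambda>_. b) qi qj t y
      = -(1 / d) * exp (- d * (y + (LINT s:{t..T}|lborel. \<sigma>\<^sup>2 * G d l (thi' s) b (qi s) (qj s))))"
    using J_re_val(2)[OF A' Ab aq t0 pos(2) l0] by simp
  have J2: "J_re T \<sigma> d l (\<lambda>_. a) (\<lambda>_. b) (\<lambda>_. P1 d0 a b) (\<lambda>_. P2 d0 a b) t y
      = -(1 / d) * exp (- d * (y + (LINT s:{t..T}|lborel. \<sigma>\<^sup>2 * G d l a b (P1 d0 a b) (P2 d0 a b))))"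
    using J_re_val(2)[OF Aa Ab ac t0 pos(2) l0] by simp
  show "J_re T \<sigma> d l thi' (\<lambda>_. b) qi qj t y \<le> J_re T \<sigma> d l (\<lambda>_. a) (\<lambda>_. b) (\<lambda>_. P1 d0 a b) (\<lambda>_. P2 d0 a b) t y"
    unfolding J1 J2 U_mono[OF pos(2)] using I M by linarith
qed

lemma eq_fp:
  assumes pos: "d0 > 0" "d1 > 0" "d2 > 0" "l1 > 0" "l2 > 0" "\<sigma> > 0" "T \<ge> 0"
    and E: "is_equilibrium T \<mu> \<sigma> c d0 d1 d2 l1 l2 th1 th2 p1 p2"
  shows "AE s in lborel. s \<in> {0..T} \<longrightarrow> 0 < th1 s \<and> 0 < th2 s \<and>
      phi d0 d1 l2 (th2 s) = th1 s \<and> phi d0 d2 l1 (th1 s) = th2 s \<and>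
      p1 s = P1 d0 (th1 s) (th2 s) \<and> p2 s = P2 d0 (th1 s) (th2 s)"
proof -
  have E': "adm_premium T th1" "adm_premium T th2" "ins_opt T \<mu> \<sigma> c d0 th1 th2 p1 p2"
     "half T \<mu> \<sigma> c d0 d1 l2 th1 th2 p1 p2" "half T \<mu> \<sigma> c d0 d2 l1 th2 th1 p2 p1"
    using E unfolding eq_iff by auto
  have o2: "ins_opt T \<mu> \<sigma> c d0 th2 th1 p2 p1" using E'(3) ins_opt_swap by blast
  have a1: "AE s in lborel. s \<in> {0..T} \<longrightarrow> th1 s = phi d0 d1 l2 (th2 s)"
    by (rule half_nec[OF pos(1,2,5,6,7) E'(1,2,3,4)])
  have a2: "AE s in lborel. s \<in> {0..T} \<longrightarrow> th2 s = phi d0 d2 l1 (th1 s)"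
    by (rule half_nec[OF pos(1,3,4,6,7) E'(2,1) o2 E'(5)])
  have a3: "AE s in lborel. s \<in> {0..T} \<longrightarrow> p1 s = P1 d0 (th1 s) (th2 s) \<and> p2 s = P2 d0 (th1 s) (th2 s)"
    by (rule ins_nec[OF E'(1,2) pos(1,6,7) E'(3)])
  have p: "\<forall>s\<in>{0..T}. 0 < th1 s \<and> 0 < th2 s" using E'(1,2) unfolding adm_premium_def by blast
  from a1 a2 a3 show ?thesis
  proof eventually_elim
    case (elim s)
    show ?case
    proof
      assume s: "s \<in> {0..T}"
      then have "0 < th1 s" "0 < th2 s" using p by auto
      then show "0 < th1 s \<and> 0 < th2 s \<and>
        phi d0 d1 l2 (th2 s) = th1 s \<and> phi d0 d2 l1 (th1 s) = th2 s \<and>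
        p1 s = P1 d0 (th1 s) (th2 s) \<and> p2 s = P2 d0 (th1 s) (th2 s)"
        using elim s by simp
    qed
  qed
qed



theorem theorem3p3:
  fixes T \<mu> \<sigma> c d0 d1 d2 l1 l2 :: real
  assumes "T > 0" "\<mu> > 0" "\<sigma> > 0" "c > 0" "d0 > 0" "d1 > 0" "d2 > 0"
    and "l1 > 0" "l2 > 0"
  shows
    "(l1 * l2 < 1 \<longrightarrow>
       (\<exists>!ab :: real \<times> real. fst ab > 0 \<and> snd ab > 0 \<and>
           phi d0 d1 l2 (snd ab) = fst ab \<and> phi d0 d2 l1 (fst ab) = snd ab) \<and>
       (\<exists>a b. a > 0 \<and> b > 0 \<and> phi d0 d1 l2 b = a \<and> phi d0 d2 l1 a = b \<and>
          is_equilibrium T \<mu> \<sigma> c d0 d1 d2 l1 l2 (\<lambda>_. a) (\<lambda>_. b)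
            (\<lambda>_. d0 * b / (d0 * a + d0 * b + 2 * a * b))
            (\<lambda>_. d0 * a / (d0 * a + d0 * b + 2 * a * b)) \<and>
          (\<forall>th1 th2 p1 p2. is_equilibrium T \<mu> \<sigma> c d0 d1 d2 l1 l2 th1 th2 p1 p2 \<longrightarrow>
             (AE s in lborel. s \<in> {0..T} \<longrightarrow>
                th1 s = a \<and> th2 s = b \<and>
                p1 s = d0 * b / (d0 * a + d0 * b + 2 * a * b) \<and>
                p2 s = d0 * a / (d0 * a + d0 * b + 2 * a * b))))) \<and>
     (l1 * l2 \<ge> 1 \<longrightarrow>
       \<not> (\<exists>th1 th2 p1 p2. is_equilibrium T \<mu> \<sigma> c d0 d1 d2 l1 l2 th1 th2 p1 p2))"
proof -
  have pos: "d0 > 0" "d1 > 0" "d2 > 0" "l1 > 0" "l2 > 0" "\<sigma> > 0" "T \<ge> 0"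
    using assms by auto
  show ?thesis
  proof (intro conjI impI)
    assume lt: "l1 * l2 < 1"
    obtain a b where ab: "a > 0" "b > 0" "phi d0 d1 l2 b = a" "phi d0 d2 l1 a = b"
      using fp_exists[OF pos(1-5) lt] by blast
    show "\<exists>!ab :: real \<times> real. fst ab > 0 \<and> snd ab > 0 \<and>
           phi d0 d1 l2 (snd ab) = fst ab \<and> phi d0 d2 l1 (fst ab) = snd ab"
    proof (rule ex1I[of _ "(a, b)"])
      show "fst (a, b) > 0 \<and> snd (a, b) > 0 \<and> phi d0 d1 l2 (snd (a, b)) = fst (a, b) \<and> phi d0 d2 l1 (fst (a, b)) = snd (a, b)"
        using ab by simp
      fix y :: "real \<times> real"
      assume y: "fst y > 0 \<and> snd y > 0 \<and> phi d0 d1 l2 (snd y) = fst y \<and> phi d0 d2 l1 (fst y) = snd y"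
      have "a = fst y \<and> b = snd y"
        using fp_unique[OF pos(1-5) ab, of "fst y" "snd y"] y by blast
      then show "y = (a, b)" by (simp add: prod_eq_iff)
    qed
    have Aa: "adm_premium T (\<lambda>_. a)" and Ab: "adm_premium T (\<lambda>_. b)" using adm_const ab by auto
    have o: "ins_opt T \<mu> \<sigma> c d0 (\<lambda>_. a) (\<lambda>_. b) (\<lambda>_. P1 d0 a b) (\<lambda>_. P2 d0 a b)"
      using ins_suff[OF Aa Ab pos(1)] by simp
    have h1: "half T \<mu> \<sigma> c d0 d1 l2 (\<lambda>_. a) (\<lambda>_. b) (\<lambda>_. P1 d0 a b) (\<lambda>_. P2 d0 a b)"
      by (rule half_suff[OF pos(1,2,5,6,7) ab(1,2) ab(3)[symmetric]])
    have h2: "half T \<mu> \<sigma> c d0 d2 l1 (\<lambda>_. b) (\<lambda>_. a) (\<lambda>_. P2 d0 a b) (\<lambda>_. P1 d0 a b)"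
      unfolding P_swap(1)[of d0 a b] P_swap(2)[of d0 a b]
      by (rule half_suff[OF pos(1,3,4,6,7) ab(2,1) ab(4)[symmetric]])
    have EQ: "is_equilibrium T \<mu> \<sigma> c d0 d1 d2 l1 l2 (\<lambda>_. a) (\<lambda>_. b) (\<lambda>_. P1 d0 a b) (\<lambda>_. P2 d0 a b)"
      unfolding eq_iff using Aa Ab o h1 h2 by blast
    have UN: "AE s in lborel. s \<in> {0..T} \<longrightarrow>
                th1 s = a \<and> th2 s = b \<and>
                p1 s = d0 * b / (d0 * a + d0 * b + 2 * a * b) \<and>
                p2 s = d0 * a / (d0 * a + d0 * b + 2 * a * b)"
      if E: "is_equilibrium T \<mu> \<sigma> c d0 d1 d2 l1 l2 th1 th2 p1 p2" for th1 th2 p1 p2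
      using eq_fp[OF pos E]
    proof eventually_elim
      case (elim s)
      show ?case
      proof
        assume s: "s \<in> {0..T}"
        have f: "0 < th1 s" "0 < th2 s" "phi d0 d1 l2 (th2 s) = th1 s" "phi d0 d2 l1 (th1 s) = th2 s"
          "p1 s = P1 d0 (th1 s) (th2 s)" "p2 s = P2 d0 (th1 s) (th2 s)" using elim s by auto
        have "a = th1 s \<and> b = th2 s" using fp_unique[OF pos(1-5) ab f(1-4)] .
        then show "th1 s = a \<and> th2 s = b \<and>
                p1 s = d0 * b / (d0 * a + d0 * b + 2 * a * b) \<and>
                p2 s = d0 * a / (d0 * a + d0 * b + 2 * a * b)"
          using f(5,6) unfolding P1_def P2_def by simp
      qed
    qed
    show "\<exists>a b. a > 0 \<and> b > 0 \<and> phi d0 d1 l2 b = a \<and> phi d0 d2 l1 a = b \<and>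
          is_equilibrium T \<mu> \<sigma> c d0 d1 d2 l1 l2 (\<lambda>_. a) (\<lambda>_. b)
            (\<lambda>_. d0 * b / (d0 * a + d0 * b + 2 * a * b))
            (\<lambda>_. d0 * a / (d0 * a + d0 * b + 2 * a * b)) \<and>
          (\<forall>th1 th2 p1 p2. is_equilibrium T \<mu> \<sigma> c d0 d1 d2 l1 l2 th1 th2 p1 p2 \<longrightarrow>
             (AE s in lborel. s \<in> {0..T} \<longrightarrow>
                th1 s = a \<and> th2 s = b \<and>
                p1 s = d0 * b / (d0 * a + d0 * b + 2 * a * b) \<and>
                p2 s = d0 * a / (d0 * a + d0 * b + 2 * a * b)))"
      using ab EQ UN unfolding P1_def P2_def by blast
  next
    assume ge: "l1 * l2 \<ge> 1"
    show "\<not> (\<exists>th1 th2 p1 p2. is_equilibrium T \<mu> \<sigma> c d0 d1 d2 l1 l2 th1 th2 p1 p2)"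
    proof
      assume "\<exists>th1 th2 p1 p2. is_equilibrium T \<mu> \<sigma> c d0 d1 d2 l1 l2 th1 th2 p1 p2"
      then obtain th1 th2 p1 p2 where E: "is_equilibrium T \<mu> \<sigma> c d0 d1 d2 l1 l2 th1 th2 p1 p2" by blast
      have AEn: "AE s in lborel. s \<notin> {0..T}"
        using eq_fp[OF pos E]
      proof eventually_elim
        case (elim s)
        show ?case
        proof
          assume s: "s \<in> {0..T}"
          have f: "0 < th1 s" "0 < th2 s" "phi d0 d1 l2 (th2 s) = th1 s" "phi d0 d2 l1 (th1 s) = th2 s"
            using elim s by auto
          show False using fp_none[OF pos(1-5) ge f] .
        qed
      qed
      have N: "{x \<in> space lborel. \<not> (x \<notin> {0..T})} = {0..T}" by auto
      have "(AE s in lborel. s \<notin> {0..T}) \<longleftrightarrow> emeasure lborel {0..T} = 0"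
        by (rule AE_iff_measurable[OF _ N]) simp
      then have "emeasure lborel {0..T} = 0" using AEn by blast
      then show False using assms(1) by simp
    qed
  qed
qed


end
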